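(* Assume conditions (A), (B), (C). Fix $T>0$, let $\delta_k>0$ with $\delta_k\to0$, and for each $k$ let $\tau_k$ be a stopping time (with respect to the filtration generated by $(Y_k(t))_{t\ge0}$) with $0\le\tau_k<\tau_k+\delta_k\le T$. Then for every $\lambda>0$, $$\lim_{k\to\infty}\mathbf{E}\big[\rho_\lambda^2\big(Y_k(\tau_k+\delta_k),Y_k(\tau_k)\big)\big]=0,\qquad\text{where }\rho_\lambda(x,y)=|e^{-\lambda x}-e^{-\lambda y}|.$$
   Context: Model: for each $k\ge1$, let $\{\xi^{(k)}_{n,i}:n\ge0,i\ge1\}$ be i.i.d. $\mathbb{N}$-valued random variables with probability generating function $g_k$. For each $k$ and $n\ge0$ let $\{\psi^{(n)}_k(i):i\ge0\}$ be an $\mathbb{N}$-valued random function with $\psi^{(n)}_k(i)$ having probability generating function $h_k^{(i)}$; these random functions are i.i.d. in $n$ and independent of the offspring; $Z_k(0)$ is $\mathbb{N}$-valued and independent of everything else. $\phi_k^{(n)}(i)=i+\psi_k^{(n)}(i)$, $Z_k(n+1)=\sum_{i=1}^{\phi_k^{(n)}(Z_k(n))}\xi^{(k)}_{n,i}$. $\gamma_k$ positive constants increasing to $\infty$; rescaled process $Y_k(t)=Z_k(\lfloor\gamma_kt\rfloor)/k$, $t\ge0$. Parameters: $b\in\mathbb{R}$, $c\ge0$, $m$ a measure on $(0,\infty)$ with $\int(z\wedge z^2)m(dz)<\infty$, $\pi$ $\sigma$-finite on $(0,\infty)$, Borel $\beta\ge0$, $q\ge0$ satisfying (S1) $|\beta(x)|+\int_0^\infty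 q(x,z)z\pi(dz)\le K(1+x)$ and (S2) $|\beta(x)-\beta(y)|+\int_0^\infty|q(x,z)-q(y,z)|z\pi(dz)\le r(|x-y|)$ for a non-decreasing concave $r\ge0$ with $\int_{0+}r^{-1}=\infty$. $R(\lambda)=b\lambda+c\lambda^2+\int_0^\infty(e^{-\lambda z}-1+\lambda z)m(dz)$, $F(\lambda,x)=-\beta(x)\lambda+\int_0^\infty(e^{-\lambda z}-1)q(x,z)\pi(dz)$, $R_k(\lambda)=k\gamma_k[g_k(1-\lambda/k)-(1-\lambda/k)]$, $F_k(\lambda,x)=\gamma_k[h_k^{(\lfloor kx\rfloor)}(1-\lambda/k)-(1-\lambda/k)]$ for $0\le\lambda\le k$. Conditions: (A) $(R_k)$ uniformly Lipschitz on bounded intervals and $R_k\to R$; (B) $F_k\to F$ uniformly on $[0,a_1]\times[0,a_2]$ for all $a_1,a_2>0$; (C) $\frac{\gamma_k}{k}(h_k^{(\lfloor kx\rfloor)})'(1-)\le K_1(1+x)$ for some $K_1>0$, all $x\ge0,k\ge1$. *)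

theory Defs
  imports "HOL-Probability.Probability"
begin

definition pgf :: "'a measure \<Rightarrow> ('a \<Rightarrow> nat) \<Rightarrow> real \<Rightarrow> real" where
  "pgf M X s = (\<integral>\<omega>. s ^ X \<omega> \<partial>M)"

fun Zproc :: "(nat \<Rightarrow> nat \<Rightarrow> 'a \<Rightarrow> nat) \<Rightarrow> (nat \<Rightarrow> 'a \<Rightarrow> nat \<Rightarrow> nat) \<Rightarrow> ('a \<Rightarrow> nat)
               \<Rightarrow> nat \<Rightarrow> 'a \<Rightarrow> nat" where
  "Zproc xi psi Z0 0 \<omega> = Z0 \<omega>"
| "Zproc xi psi Z0 (Suc n) \<omega> =
     (\<Sum>i\<in>{1..Zproc xi psi Z0 n \<omega> + psi n \<omega> (Zproc xi psi Z0 n \<omega>)}. xi n i \<omega>)"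

definition Yproc :: "nat \<Rightarrow> real \<Rightarrow> (nat \<Rightarrow> 'a \<Rightarrow> nat) \<Rightarrow> real \<Rightarrow> 'a \<Rightarrow> real" where
  "Yproc k gam Z t \<omega> = real (Z (nat \<lfloor>gam * t\<rfloor>) \<omega>) / real k"

definition nat_filtration :: "'a measure \<Rightarrow> (real \<Rightarrow> 'a \<Rightarrow> real) \<Rightarrow> real \<Rightarrow> 'a measure" where
  "nat_filtration M Y t =
     sigma (space M) {Y s -` A \<inter> space M | s A. 0 \<le> s \<and> s \<le> t \<and> A \<in> sets borel}"

text \<open>Index set for the joint independence of all the driving randomness.\<close>
datatype src = Off nat nat | Imm nat | Init

definition rho :: "real \<Rightarrow> real \<Rightarrow> real \<Rightarrow> real" where
  "rho lam x y = \<bar>exp (- lam * x) - exp (- lam * y)\<bar>"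

definition Rfun :: "real \<Rightarrow> real \<Rightarrow> real measure \<Rightarrow> real \<Rightarrow> real" where
  "Rfun b c m lam = b * lam + c * lam^2 + (\<integral>z. exp (- lam * z) - 1 + lam * z \<partial>m)"

definition Ffun :: "(real \<Rightarrow> real) \<Rightarrow> (real \<Rightarrow> real \<Rightarrow> real) \<Rightarrow> real measure \<Rightarrow> real \<Rightarrow> real \<Rightarrow> real" where
  "Ffun \<beta> q \<pi> lam x = - \<beta> x * lam + (\<integral>z. (exp (- lam * z) - 1) * q x z \<partial>\<pi>)"

definition Rk :: "(real \<Rightarrow> real) \<Rightarrow> nat \<Rightarrow> real \<Rightarrow> real \<Rightarrow> real" where
  "Rk g k gam lam = real k * gam * (g (1 - lam / real k) - (1 - lam / real k))"

definition Fk :: "(nat \<Rightarrow> real \<Rightarrow> real) \<Rightarrow> nat \<Rightarrow> real \<Rightarrow> real \<Rightarrow> real \<Rightarrow> real" where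
  "Fk h k gam lam x = gam * (h (nat \<lfloor>real k * x\<rfloor>) (1 - lam / real k) - (1 - lam / real k))"

end

theory Submission
  imports Defs
begin


definition Ev :: "(nat \<Rightarrow> nat \<Rightarrow> 'a \<Rightarrow> nat) \<Rightarrow> (nat \<Rightarrow> 'a \<Rightarrow> nat \<Rightarrow> nat) \<Rightarrow> ('a \<Rightarrow> nat) \<Rightarrow> 'a measure \<Rightarrow> src \<Rightarrow> 'a set set" where
  "Ev xi psi Z0 M j = (case j of
               Off n i \<Rightarrow> {xi n i -` A \<inter> space M | A. True}
             | Imm n \<Rightarrow> {psi n -` A \<inter> space M | A. A \<in> sets (PiM (UNIV :: nat set) (\<lambda>_. count_space (UNIV :: nat set)))}
             | Init \<Rightarrow> {Z0 -` A \<inter> space M | A. True})"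

definition Ix :: "src set" where "Ix = {Off n i | n i. 1 \<le> i} \<union> range Imm \<union> {Init}"
definition Past :: "nat \<Rightarrow> src set" where "Past n = {Off m i | m i. 1 \<le> i \<and> m < n} \<union> Imm ` {..<n} \<union> {Init}"
definition Cur :: "nat \<Rightarrow> src set" where "Cur n = {Off n i | i. 1 \<le> i} \<union> {Imm n}"

lemma (in prob_space) indep_fubini:
  fixes F :: "'x \<times> 'y \<Rightarrow> real" and N1 :: "'x measure" and N2 :: "'y measure"
  assumes rv: "X \<in> measurable M N1" "Y \<in> measurable M N2"
    and ind: "\<And>A B. A \<in> sets N1 \<Longrightarrow> B \<in> sets N2 \<Longrightarrow>
       prob (X -` A \<inter> Y -` B \<inter> space M) = prob (X -` A \<inter> space M) * prob (Y -` B \<inter> space M)"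
    and F: "F \<in> borel_measurable (N1 \<Otimes>\<^sub>M N2)"
    and bnd: "\<And>z. \<bar>F z\<bar> \<le> B"
  shows "(\<integral>\<omega>. F (X \<omega>, Y \<omega>) \<partial>M) = (\<integral>\<omega>. (\<integral>\<omega>'. F (X \<omega>, Y \<omega>') \<partial>M) \<partial>M)"
proof -
  interpret P1: prob_space "distr M N1 X" by (rule prob_space_distr) fact
  interpret P2: prob_space "distr M N2 Y" by (rule prob_space_distr) fact
  interpret P: pair_prob_space "distr M N1 X" "distr M N2 Y" ..
  have XY: "(\<lambda>x. (X x, Y x)) \<in> measurable M (N1 \<Otimes>\<^sub>M N2)" by (intro measurable_Pair rv)
  have eq: "distr M N1 X \<Otimes>\<^sub>M distr M N2 Y = distr M (N1 \<Otimes>\<^sub>M N2) (\<lambda>x. (X x, Y x))"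
  proof (rule pair_measure_eqI)
    show "sigma_finite_measure (distr M N1 X)" ..
    show "sigma_finite_measure (distr M N2 Y)" ..
    fix A B assume A: "A \<in> sets (distr M N1 X)" and B: "B \<in> sets (distr M N2 Y)"
    have "emeasure (distr M (N1 \<Otimes>\<^sub>M N2) (\<lambda>x. (X x, Y x))) (A \<times> B) = emeasure M ((\<lambda>x. (X x, Y x)) -` (A \<times> B) \<inter> space M)"
      using A B by (intro emeasure_distr[OF XY]) auto
    also have "(\<lambda>x. (X x, Y x)) -` (A \<times> B) \<inter> space M = X -` A \<inter> Y -` B \<inter> space M" by auto
    also have "emeasure M \<dots> = emeasure M (X -` A \<inter> space M) * emeasure M (Y -` B \<inter> space M)"
      using ind[of A B] A B
      by (simp add: emeasure_eq_measure measure_nonneg ennreal_mult)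
    also have "\<dots> = emeasure (distr M N1 X) A * emeasure (distr M N2 Y) B"
      using rv A B by (simp add: emeasure_distr)
    finally show "emeasure (distr M N1 X) A * emeasure (distr M N2 Y) B = emeasure (distr M (N1 \<Otimes>\<^sub>M N2) (\<lambda>x. (X x, Y x))) (A \<times> B)" by simp
  qed simp
  have int: "integrable (distr M N1 X \<Otimes>\<^sub>M distr M N2 Y) F"
  proof (rule P.integrable_const_bound[where B=B])
    show "AE x in distr M N1 X \<Otimes>\<^sub>M distr M N2 Y. norm (F x) \<le> B" using bnd by simp
    show "F \<in> borel_measurable (distr M N1 X \<Otimes>\<^sub>M distr M N2 Y)" using F by simp
  qed
  have "(\<integral>\<omega>. F (X \<omega>, Y \<omega>) \<partial>M) = (\<integral>z. F z \<partial>distr M (N1 \<Otimes>\<^sub>M N2) (\<lambda>x. (X x, Y x)))"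
    by (subst integral_distr) (auto intro!: XY F)
  also have "\<dots> = (\<integral>z. F z \<partial>(distr M N1 X \<Otimes>\<^sub>M distr M N2 Y))" by (simp add: eq)
  also have "\<dots> = (\<integral>x. (\<integral>y. F (x, y) \<partial>distr M N2 Y) \<partial>distr M N1 X)"
    by (rule P.integral_fst'[OF int, symmetric])
  also have "\<dots> = (\<integral>x. (\<integral>\<omega>'. F (x, Y \<omega>') \<partial>M) \<partial>distr M N1 X)"
  proof (rule Bochner_Integration.integral_cong[OF refl])
    fix x assume "x \<in> space (distr M N1 X)"
    then show "(\<integral>y. F (x, y) \<partial>distr M N2 Y) = (\<integral>\<omega>'. F (x, Y \<omega>') \<partial>M)"
      by (intro integral_distr rv measurable_Pair2[OF F]) simp
  qed
  also have "\<dots> = (\<integral>\<omega>. (\<integral>\<omega>'. F (X \<omega>, Y \<omega>') \<partial>M) \<partial>M)"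
  proof (rule integral_distr[OF rv(1)])
    have "(\<lambda>x. \<integral>y. F (x, y) \<partial>distr M N2 Y) \<in> borel_measurable N1"
      using P2.borel_measurable_lebesgue_integral[of "\<lambda>x y. F (x,y)" N1] F by (simp add: case_prod_eta)
    then show "(\<lambda>x. \<integral>\<omega>'. F (x, Y \<omega>') \<partial>M) \<in> borel_measurable N1"
      by (rule measurable_cong[THEN iffD1, rotated]) (intro integral_distr rv measurable_Pair2[OF F]; simp)
  qed
  finally show ?thesis .
qed

locale bpdi = prob_space M for M :: "'a measure" +
  fixes xi :: "nat \<Rightarrow> nat \<Rightarrow> 'a \<Rightarrow> nat" and psi :: "nat \<Rightarrow> 'a \<Rightarrow> nat \<Rightarrow> nat" and Z0 :: "'a \<Rightarrow> nat"
  assumes xi_m: "\<And>n i. xi n i \<in> measurable M (count_space UNIV)"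
  and psi_m: "\<And>n. psi n \<in> measurable M (PiM UNIV (\<lambda>_. count_space UNIV))"
  and Z0_m: "Z0 \<in> measurable M (count_space UNIV)"
  and ind: "indep_sets (Ev xi psi Z0 M) Ix"
begin

abbreviation "E \<equiv> Ev xi psi Z0 M"

lemma Int_stable_vimage: "(\<And>A B. P A \<Longrightarrow> P B \<Longrightarrow> P (A \<inter> B)) \<Longrightarrow> Int_stable {f -` A \<inter> S | A. P A}"
  unfolding Int_stable_def
proof (clarsimp)
  fix A B assume "\<And>A B. P A \<Longrightarrow> P B \<Longrightarrow> P (A \<inter> B)" "P A" "P B"
  then show "\<exists>C. f -` A \<inter> S \<inter> (f -` B \<inter> S) = f -` C \<inter> S \<and> P C"
    by (intro exI[of _ "A \<inter> B"]) auto
qed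

lemma E_Int_stable: "Int_stable (E j)"
proof (cases j)
  case (Off n i)
  have "Int_stable {xi n i -` A \<inter> space M | A. True}" by (rule Int_stable_vimage) auto
  then show ?thesis using Off by (simp add: Ev_def)
next
  case (Imm n) then show ?thesis by (auto simp: Ev_def intro!: Int_stable_vimage)
next
  case Init
  have "Int_stable {Z0 -` A \<inter> space M | A. True}" by (rule Int_stable_vimage) auto
  then show ?thesis using Init by (simp add: Ev_def)
qed

lemma E_sub: "E j \<subseteq> Pow (space M)"
  unfolding Ev_def by (cases j) auto

lemma indep2:
  assumes "P \<subseteq> Ix" "Q \<subseteq> Ix" "P \<inter> Q = {}"
  shows "indep_set (sigma_sets (space M) (\<Union>(E ` P))) (sigma_sets (space M) (\<Union>(E ` Q)))"
proof -
  have "indep_sets (\<lambda>j. sigma_sets (space M) (\<Union>i\<in>case_bool P Q j. E i)) UNIV"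
  proof (rule indep_sets_collect_sigma)
    show "indep_sets E (\<Union>j\<in>UNIV. case_bool P Q j)"
      by (rule indep_sets_mono_index[OF _ ind]) (use assms in \<open>auto split: bool.splits\<close>)
    show "Int_stable (E i)" for i by (rule E_Int_stable)
    show "disjoint_family_on (case_bool P Q) UNIV"
      using assms by (auto simp: disjoint_family_on_def split: bool.split)
  qed
  then show ?thesis unfolding indep_set_def
    by (rule indep_sets_cong[THEN iffD1, rotated 2]) (auto split: bool.split)
qed

definition "HH n = sigma (space M) (\<Union>(E ` Past n))"
definition "CC n = sigma (space M) (\<Union>(E ` Cur n))"

lemma sets_HH: "sets (HH n) = sigma_sets (space M) (\<Union>(E ` Past n))"
  unfolding HH_def using E_sub by (intro sets_measure_of) auto
lemma space_HH[simp]: "space (HH n) = space M"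
  unfolding HH_def using E_sub by (intro space_measure_of) auto
lemma sets_CC: "sets (CC n) = sigma_sets (space M) (\<Union>(E ` Cur n))"
  unfolding CC_def using E_sub by (intro sets_measure_of) auto
lemma space_CC[simp]: "space (CC n) = space M"
  unfolding CC_def using E_sub by (intro space_measure_of) auto

lemma E_events: "E j \<subseteq> sets M"
  unfolding Ev_def using xi_m psi_m Z0_m
  by (cases j) (auto intro!: measurable_sets)

lemma HH_sub: "sets (HH n) \<subseteq> sets M"
  unfolding sets_HH using E_events by (intro sets.sigma_sets_subset) auto
lemma CC_sub: "sets (CC n) \<subseteq> sets M"
  unfolding sets_CC using E_events by (intro sets.sigma_sets_subset) auto

lemma subalg_HH: "subalgebra M (HH n)"
  unfolding subalgebra_def using HH_sub by simp
lemma subalg_CC: "subalgebra M (CC n)"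
  unfolding subalgebra_def using CC_sub by simp

lemma Past_mono: "m \<le> n \<Longrightarrow> Past m \<subseteq> Past n"
  unfolding Past_def by auto

lemma HH_mono: "m \<le> n \<Longrightarrow> sets (HH m) \<subseteq> sets (HH n)"
  unfolding sets_HH using Past_mono[of m n] by (intro sigma_sets_mono') auto

lemma HH_mono_meas: "m \<le> n \<Longrightarrow> f \<in> measurable (HH m) N \<Longrightarrow> f \<in> measurable (HH n) N"
  using HH_mono[of m n] unfolding measurable_def by auto

lemma gen_meas:
  assumes "\<And>x. x \<in> space M \<Longrightarrow> f x \<in> space N" "\<And>A. A \<in> sets N \<Longrightarrow> f -` A \<inter> space M \<in> G"
    "G \<subseteq> Pow (space M)"
  shows "f \<in> measurable (sigma (space M) G) N"
  using assms by (intro measurableI) (auto simp: sets_measure_of space_measure_of)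

lemma xi_HH: "m < n \<Longrightarrow> 1 \<le> i \<Longrightarrow> xi m i \<in> measurable (HH n) (count_space UNIV)"
  unfolding HH_def
proof (intro gen_meas)
  fix A assume "m < n" "1 \<le> i"
  then show "xi m i -` A \<inter> space M \<in> \<Union>(E ` Past n)"
    by (intro UN_I[of "Off m i"]) (auto simp: Past_def Ev_def)
qed (use E_sub in auto)

lemma psi_HH: "m < n \<Longrightarrow> psi m \<in> measurable (HH n) (PiM UNIV (\<lambda>_. count_space UNIV))"
  unfolding HH_def
proof (intro gen_meas)
  fix A assume "m < n" "A \<in> sets (PiM UNIV (\<lambda>_. count_space UNIV) :: (nat \<Rightarrow> nat) measure)"
  then show "psi m -` A \<inter> space M \<in> \<Union>(E ` Past n)"
    by (intro UN_I[of "Imm m"]) (auto simp: Past_def Ev_def)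
qed (use E_sub in \<open>auto simp: space_PiM\<close>)

lemma Z0_HH: "Z0 \<in> measurable (HH n) (count_space UNIV)"
  unfolding HH_def
proof (intro gen_meas)
  fix A
  show "Z0 -` A \<inter> space M \<in> \<Union>(E ` Past n)"
    by (intro UN_I[of "Init"]) (auto simp: Past_def Ev_def)
qed (use E_sub in auto)

abbreviation "Z \<equiv> Zproc xi psi Z0"

lemma sum_shift1: "(\<Sum>i\<in>{Suc 0..q}. f i) = (\<Sum>i<q. f (Suc i) :: 'b::comm_monoid_add)"
proof (induction q)
  case (Suc q) then show ?case by (simp add: sum.atLeast_Suc_atMost)
qed simp

lemma Z_Suc: "Z (Suc m) \<omega> = (\<Sum>i<Z m \<omega> + psi m \<omega> (Z m \<omega>). xi m (Suc i) \<omega>)"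
  by (simp add: sum_shift1)

lemma Z_HH: "m \<le> n \<Longrightarrow> Z m \<in> measurable (HH n) (count_space UNIV)"
proof (induction m)
  case 0 then show ?case using Z0_HH by simp
next
  case (Suc m)
  then have Zm: "Z m \<in> measurable (HH n) (count_space UNIV)" by simp
  have p: "(\<lambda>\<omega>. psi m \<omega> z) \<in> measurable (HH n) (count_space UNIV)" for z
    using measurable_component_singleton'[OF psi_HH[of m n] measurable_ident, of z] Suc by simp
  have pz: "(\<lambda>\<omega>. psi m \<omega> (Z m \<omega>)) \<in> measurable (HH n) (count_space UNIV)"
    by (rule measurable_compose_countable[OF p Zm])
  have q: "(\<lambda>\<omega>. Z m \<omega> + psi m \<omega> (Z m \<omega>)) \<in> measurable (HH n) (count_space UNIV)"
    using Zm pz by measurable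
  have s: "(\<lambda>\<omega>. \<Sum>i<q. xi m (Suc i) \<omega>) \<in> measurable (HH n) (count_space UNIV)" for q
  proof -
    have "\<And>i. xi m (Suc i) \<in> measurable (HH n) (count_space UNIV)"
      using Suc.prems by (intro xi_HH) auto
    then show ?thesis by measurable
  qed
  show ?case unfolding Z_Suc[abs_def]
    by (rule measurable_compose_countable[OF s q])
qed

lemma Z_M: "Z m \<in> measurable M (count_space UNIV)"
  using measurable_from_subalg[OF subalg_HH Z_HH[OF order_refl]] .

lemma sig_sets: "sets (sigma (space M) (\<Union>(E ` Q))) = sigma_sets (space M) (\<Union>(E ` Q))"
  using E_sub by (intro sets_measure_of) auto
lemma sig_space[simp]: "space (sigma (space M) (\<Union>(E ` Q))) = space M"
  using E_sub by (intro space_measure_of) auto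
lemma subalg_sig: "subalgebra M (sigma (space M) (\<Union>(E ` Q)))"
  unfolding subalgebra_def using E_events by (auto simp: sig_sets intro!: sets.sigma_sets_subset)

lemma xi_sig: "Off n i \<in> Q \<Longrightarrow> xi n i \<in> measurable (sigma (space M) (\<Union>(E ` Q))) (count_space UNIV)"
proof (intro gen_meas)
  fix A assume "Off n i \<in> Q"
  then show "xi n i -` A \<inter> space M \<in> \<Union>(E ` Q)"
    by (intro UN_I[of "Off n i"]) (auto simp: Ev_def)
qed (use E_sub in auto)

lemma psi_sig: "Imm n \<in> Q \<Longrightarrow> psi n \<in> measurable (sigma (space M) (\<Union>(E ` Q))) (PiM UNIV (\<lambda>_. count_space UNIV))"
proof (intro gen_meas)
  fix A assume "Imm n \<in> Q" "A \<in> sets (PiM UNIV (\<lambda>_. count_space UNIV) :: (nat \<Rightarrow> nat) measure)"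
  then show "psi n -` A \<inter> space M \<in> \<Union>(E ` Q)"
    by (intro UN_I[of "Imm n"]) (auto simp: Ev_def)
qed (use E_sub in \<open>auto simp: space_PiM\<close>)

lemma Xi_sig: assumes "\<And>i. 1 \<le> i \<Longrightarrow> Off n i \<in> Q"
  shows "(\<lambda>\<omega> j. xi n (Suc j) \<omega>) \<in> measurable (sigma (space M) (\<Union>(E ` Q))) (PiM UNIV (\<lambda>_. count_space UNIV))"
  by (rule measurable_PiM_single') (auto intro!: xi_sig assms simp: space_PiM)

lemma indepQ:
  assumes "P \<subseteq> Ix" "Q \<subseteq> Ix" "P \<inter> Q = {}"
    and f: "f \<in> measurable (sigma (space M) (\<Union>(E ` P))) N1"
    and g: "g \<in> measurable (sigma (space M) (\<Union>(E ` Q))) N2"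
    and A: "A \<in> sets N1" and B: "B \<in> sets N2"
  shows "prob (f -` A \<inter> g -` B \<inter> space M) = prob (f -` A \<inter> space M) * prob (g -` B \<inter> space M)"
proof -
  have a: "f -` A \<inter> space M \<in> sigma_sets (space M) (\<Union>(E ` P))"
    using measurable_sets[OF f A] by (simp add: sig_sets)
  have b: "g -` B \<inter> space M \<in> sigma_sets (space M) (\<Union>(E ` Q))"
    using measurable_sets[OF g B] by (simp add: sig_sets)
  have "prob ((f -` A \<inter> space M) \<inter> (g -` B \<inter> space M)) = prob (f -` A \<inter> space M) * prob (g -` B \<inter> space M)"
    by (rule indep_setD[OF indep2[OF assms(1-3)] a b])
  moreover have "(f -` A \<inter> space M) \<inter> (g -` B \<inter> space M) = f -` A \<inter> g -` B \<inter> space M" by auto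
  ultimately show ?thesis by simp
qed

lemma xi_prod:
  fixes s a :: real
  assumes s: "0 \<le> s" "s \<le> 1" and pg: "\<And>i. 1 \<le> i \<Longrightarrow> (\<integral>\<omega>. s ^ xi n i \<omega> \<partial>M) = a"
  shows "(\<integral>\<omega>. s ^ (\<Sum>i\<in>{Suc 0..q}. xi n i \<omega>) \<partial>M) = a ^ q"
proof -
  define X where "X = (\<lambda>j \<omega>. s ^ xi n (case j of Off _ i \<Rightarrow> i | _ \<Rightarrow> 0) \<omega>)"
  define J where "J = Off n ` {Suc 0..q}"
  have iv: "indep_vars (\<lambda>_. borel) X J"
    unfolding indep_vars_def2
  proof
    show "\<forall>i\<in>J. random_variable borel (X i)"
      unfolding X_def using xi_m by auto
    have "indep_sets E J"
      by (rule indep_sets_mono_index[OF _ ind]) (auto simp: J_def Ix_def)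
    then show "indep_sets (\<lambda>i. {X i -` A \<inter> space M |A. A \<in> sets borel}) J"
    proof (rule indep_sets_mono_sets)
      fix j assume "j \<in> J"
      then obtain i where j: "j = Off n i" unfolding J_def by auto
      show "{X j -` A \<inter> space M |A. A \<in> sets borel} \<subseteq> E j"
      proof
        fix x assume "x \<in> {X j -` A \<inter> space M |A. A \<in> sets borel}"
        then obtain A where "x = X j -` A \<inter> space M" by auto
        then have "x = xi n i -` ((\<lambda>m. s ^ m) -` A) \<inter> space M" by (auto simp: X_def j)
        then show "x \<in> E j" by (auto simp: Ev_def j)
      qed
    qed
  qed
  have "(\<integral>\<omega>. (\<Prod>j\<in>J. X j \<omega>) \<partial>M) = (\<Prod>j\<in>J. \<integral>\<omega>. X j \<omega> \<partial>M)"
  proof (rule indep_vars_lebesgue_integral)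
    show "finite J" by (simp add: J_def)
    show "indep_vars (\<lambda>_. borel) X J" by (rule iv)
    fix j assume "j \<in> J"
    show "integrable M (X j)"
    proof (rule integrable_const_bound[where B=1])
      show "AE x in M. norm (X j x) \<le> 1" using s by (auto simp: X_def power_le_one)
      show "X j \<in> borel_measurable M" unfolding X_def using xi_m by auto
    qed
  qed
  moreover have "(\<Prod>j\<in>J. X j \<omega>) = s ^ (\<Sum>i\<in>{Suc 0..q}. xi n i \<omega>)" for \<omega>
    by (simp add: J_def prod.reindex inj_on_def power_sum X_def)
  moreover have "(\<Prod>j\<in>J. \<integral>\<omega>. X j \<omega> \<partial>M) = a ^ q"
    by (simp add: J_def prod.reindex inj_on_def X_def pg)
  ultimately show ?thesis by simp
qed

abbreviation "PS \<equiv> (PiM UNIV (\<lambda>_. count_space UNIV) :: (nat \<Rightarrow> nat) measure)"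

lemma inner:
  fixes s a :: real
  assumes s: "0 \<le> s" "s \<le> 1" and pg: "\<And>i. 1 \<le> i \<Longrightarrow> (\<integral>\<omega>. s ^ xi n i \<omega> \<partial>M) = a"
  shows "(\<integral>\<omega>. s ^ (\<Sum>j<z + psi n \<omega> z. xi n (Suc j) \<omega>) \<partial>M) = a ^ z * (\<integral>\<omega>. a ^ psi n \<omega> z \<partial>M)"
proof -
  define F where "F = (\<lambda>(p :: nat \<Rightarrow> nat, xs :: nat \<Rightarrow> nat). s ^ (\<Sum>j<z + p z. xs j))"
  have Fm: "F \<in> borel_measurable (PS \<Otimes>\<^sub>M PS)"
  proof -
    have "(\<lambda>v :: (nat \<Rightarrow> nat) \<times> (nat \<Rightarrow> nat). s ^ (\<Sum>j<q. snd v j)) \<in> borel_measurable (PS \<Otimes>\<^sub>M PS)" for q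
      by measurable
    moreover have "(\<lambda>v :: (nat \<Rightarrow> nat) \<times> (nat \<Rightarrow> nat). z + fst v z) \<in> measurable (PS \<Otimes>\<^sub>M PS) (count_space UNIV)"
      by measurable
    ultimately have "(\<lambda>v. s ^ (\<Sum>j<z + fst v z. snd v j)) \<in> borel_measurable (PS \<Otimes>\<^sub>M PS)"
      by (rule measurable_compose_countable)
    then show ?thesis unfolding F_def by (simp add: case_prod_beta')
  qed
  have Fb: "\<bar>F v\<bar> \<le> 1" for v using s by (auto simp: F_def power_le_one split: prod.split)
  have m1: "psi n \<in> measurable (sigma (space M) (\<Union>(E ` {Imm n}))) PS"
    by (rule psi_sig) simp
  have m2: "(\<lambda>\<omega> j. xi n (Suc j) \<omega>) \<in> measurable (sigma (space M) (\<Union>(E ` {Off n i | i. 1 \<le> i}))) PS"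
    by (rule Xi_sig) auto
  have "(\<integral>\<omega>. F (psi n \<omega>, (\<lambda>j. xi n (Suc j) \<omega>)) \<partial>M) = (\<integral>\<omega>. (\<integral>\<omega>'. F (psi n \<omega>, (\<lambda>j. xi n (Suc j) \<omega>')) \<partial>M) \<partial>M)"
  proof (rule indep_fubini[OF _ _ _ Fm Fb])
    show "psi n \<in> measurable M PS" by (rule measurable_from_subalg[OF subalg_sig m1])
    show "(\<lambda>\<omega> j. xi n (Suc j) \<omega>) \<in> measurable M PS" by (rule measurable_from_subalg[OF subalg_sig m2])
    fix A B assume "A \<in> sets PS" "B \<in> sets PS"
    then show "prob (psi n -` A \<inter> (\<lambda>\<omega> j. xi n (Suc j) \<omega>) -` B \<inter> space M) =
       prob (psi n -` A \<inter> space M) * prob ((\<lambda>\<omega> j. xi n (Suc j) \<omega>) -` B \<inter> space M)"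
      by (intro indepQ[OF _ _ _ m1 m2]) (auto simp: Ix_def)
  qed
  also have "\<dots> = (\<integral>\<omega>. a ^ z * a ^ psi n \<omega> z \<partial>M)"
  proof (rule Bochner_Integration.integral_cong[OF refl])
    fix \<omega>
    have "(\<integral>\<omega>'. F (psi n \<omega>, (\<lambda>j. xi n (Suc j) \<omega>')) \<partial>M) = (\<integral>\<omega>'. s ^ (\<Sum>i\<in>{Suc 0..z + psi n \<omega> z}. xi n i \<omega>') \<partial>M)"
      by (simp add: F_def sum_shift1)
    also have "\<dots> = a ^ (z + psi n \<omega> z)" by (rule xi_prod[OF s pg])
    finally show "(\<integral>\<omega>'. F (psi n \<omega>, (\<lambda>j. xi n (Suc j) \<omega>')) \<partial>M) = a ^ z * a ^ psi n \<omega> z"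
      by (simp add: power_add)
  qed
  also have "\<dots> = a ^ z * (\<integral>\<omega>. a ^ psi n \<omega> z \<partial>M)" by simp
  finally show ?thesis by (simp add: F_def)
qed

lemma Past_Ix: "Past n \<subseteq> Ix" and Cur_Ix: "Cur n \<subseteq> Ix" and Past_Cur: "Past n \<inter> Cur n = {}"
  by (auto simp: Past_def Cur_def Ix_def)

lemma one_step:
  fixes s a B :: real and W :: "'a \<Rightarrow> real"
  assumes s: "0 \<le> s" "s \<le> 1" and pg: "\<And>i. 1 \<le> i \<Longrightarrow> (\<integral>\<omega>. s ^ xi n i \<omega> \<partial>M) = a"
    and Wm: "W \<in> borel_measurable (HH n)" and Wb: "\<And>\<omega>. \<omega> \<in> space M \<Longrightarrow> \<bar>W \<omega>\<bar> \<le> B"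
  shows "(\<integral>\<omega>. W \<omega> * s ^ Z (Suc n) \<omega> \<partial>M)
      = (\<integral>\<omega>. W \<omega> * (a ^ Z n \<omega> * (\<integral>\<omega>'. a ^ psi n \<omega>' (Z n \<omega>) \<partial>M)) \<partial>M)"
proof -
  have B0: "0 \<le> B" using Wb[of "SOME x. x \<in> space M"] not_empty some_in_eq by fastforce
  define cl where "cl = (\<lambda>w::real. max (-B) (min B w))"
  have cl: "\<omega> \<in> space M \<Longrightarrow> cl (W \<omega>) = W \<omega>" for \<omega> using Wb[of \<omega>] by (auto simp: cl_def)
  define F where "F = (\<lambda>((w::real, z::nat), (p :: nat \<Rightarrow> nat, xs :: nat \<Rightarrow> nat)). cl w * s ^ (\<Sum>j<z + p z. xs j))"
  have Fm: "F \<in> borel_measurable ((borel \<Otimes>\<^sub>M count_space UNIV) \<Otimes>\<^sub>M (PS \<Otimes>\<^sub>M PS))"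
  proof -
    have "(\<lambda>v :: (real \<times> nat) \<times> (nat \<Rightarrow> nat) \<times> (nat \<Rightarrow> nat). cl (fst (fst v)) * s ^ (\<Sum>j<q. snd (snd v) j)) \<in> borel_measurable ((borel \<Otimes>\<^sub>M count_space UNIV) \<Otimes>\<^sub>M (PS \<Otimes>\<^sub>M PS))" for q
      unfolding cl_def by measurable
    moreover have "(\<lambda>v :: (real \<times> nat) \<times> (nat \<Rightarrow> nat) \<times> (nat \<Rightarrow> nat). snd (fst v) + fst (snd v) (snd (fst v))) \<in> measurable ((borel \<Otimes>\<^sub>M count_space UNIV) \<Otimes>\<^sub>M (PS \<Otimes>\<^sub>M PS)) (count_space UNIV)"
    proof -
      have "(\<lambda>v :: (real \<times> nat) \<times> (nat \<Rightarrow> nat) \<times> (nat \<Rightarrow> nat). u + fst (snd v) u) \<in> measurable ((borel \<Otimes>\<^sub>M count_space UNIV) \<Otimes>\<^sub>M (PS \<Otimes>\<^sub>M PS)) (count_space UNIV)" for u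
        by measurable
      moreover have "(\<lambda>v :: (real \<times> nat) \<times> (nat \<Rightarrow> nat) \<times> (nat \<Rightarrow> nat). snd (fst v)) \<in> measurable ((borel \<Otimes>\<^sub>M count_space UNIV) \<Otimes>\<^sub>M (PS \<Otimes>\<^sub>M PS)) (count_space UNIV)"
        by measurable
      ultimately show ?thesis by (rule measurable_compose_countable)
    qed
    ultimately have "(\<lambda>v. cl (fst (fst v)) * s ^ (\<Sum>j<snd (fst v) + fst (snd v) (snd (fst v)). snd (snd v) j)) \<in> borel_measurable ((borel \<Otimes>\<^sub>M count_space UNIV) \<Otimes>\<^sub>M (PS \<Otimes>\<^sub>M PS))"
      by (rule measurable_compose_countable[where f="\<lambda>q v. cl (fst (fst v)) * s ^ (\<Sum>j<q. snd (snd v) j)"])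
    then show ?thesis unfolding F_def by (simp add: case_prod_beta')
  qed
  have Fb: "\<bar>F v\<bar> \<le> B" for v
  proof -
    obtain w z p xs where v: "v = ((w,z),(p,xs))" by (metis prod.exhaust)
    have "\<bar>cl w\<bar> \<le> B" using B0 by (auto simp: cl_def)
    moreover have "\<bar>s ^ (\<Sum>j<z + p z. xs j)\<bar> \<le> 1" using s by (auto simp: power_le_one)
    ultimately have "\<bar>cl w\<bar> * \<bar>s ^ (\<Sum>j<z + p z. xs j)\<bar> \<le> B * 1"
      by (intro mult_mono) auto
    then show ?thesis by (simp add: F_def v abs_mult)
  qed
  have mX: "(\<lambda>\<omega>. (W \<omega>, Z n \<omega>)) \<in> measurable (HH n) (borel \<Otimes>\<^sub>M count_space UNIV)"
    using Wm Z_HH[of n n] by measurable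
  have mX': "(\<lambda>\<omega>. (W \<omega>, Z n \<omega>)) \<in> measurable (sigma (space M) (\<Union>(E ` Past n))) (borel \<Otimes>\<^sub>M count_space UNIV)"
    using mX by (simp add: HH_def)
  have mY: "(\<lambda>\<omega>. (psi n \<omega>, (\<lambda>j. xi n (Suc j) \<omega>))) \<in> measurable (sigma (space M) (\<Union>(E ` Cur n))) (PS \<Otimes>\<^sub>M PS)"
  proof (rule measurable_Pair)
    show "psi n \<in> measurable (sigma (space M) (\<Union>(E ` Cur n))) PS" by (rule psi_sig) (simp add: Cur_def)
    show "(\<lambda>\<omega> j. xi n (Suc j) \<omega>) \<in> measurable (sigma (space M) (\<Union>(E ` Cur n))) PS" by (rule Xi_sig) (simp add: Cur_def)
  qed
  have "(\<integral>\<omega>. F ((W \<omega>, Z n \<omega>), (psi n \<omega>, (\<lambda>j. xi n (Suc j) \<omega>))) \<partial>M)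
     = (\<integral>\<omega>. (\<integral>\<omega>'. F ((W \<omega>, Z n \<omega>), (psi n \<omega>', (\<lambda>j. xi n (Suc j) \<omega>'))) \<partial>M) \<partial>M)"
  proof (rule indep_fubini[OF _ _ _ Fm Fb])
    show "(\<lambda>\<omega>. (W \<omega>, Z n \<omega>)) \<in> measurable M (borel \<Otimes>\<^sub>M count_space UNIV)" by (rule measurable_from_subalg[OF subalg_HH mX])
    show "(\<lambda>\<omega>. (psi n \<omega>, (\<lambda>j. xi n (Suc j) \<omega>))) \<in> measurable M (PS \<Otimes>\<^sub>M PS)" by (rule measurable_from_subalg[OF subalg_sig mY])
    fix A :: "(real \<times> nat) set" and B' :: "((nat \<Rightarrow> nat) \<times> (nat \<Rightarrow> nat)) set" assume "A \<in> sets (borel \<Otimes>\<^sub>M count_space UNIV)" "B' \<in> sets (PS \<Otimes>\<^sub>M PS)"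
    then show "prob ((\<lambda>\<omega>. (W \<omega>, Z n \<omega>)) -` A \<inter> (\<lambda>\<omega>. (psi n \<omega>, (\<lambda>j. xi n (Suc j) \<omega>))) -` B' \<inter> space M) =
       prob ((\<lambda>\<omega>. (W \<omega>, Z n \<omega>)) -` A \<inter> space M) * prob ((\<lambda>\<omega>. (psi n \<omega>, (\<lambda>j. xi n (Suc j) \<omega>))) -` B' \<inter> space M)"
      by (intro indepQ[OF Past_Ix Cur_Ix Past_Cur mX' mY])
  qed
  also have "\<dots> = (\<integral>\<omega>. W \<omega> * (a ^ Z n \<omega> * (\<integral>\<omega>'. a ^ psi n \<omega>' (Z n \<omega>) \<partial>M)) \<partial>M)"
  proof (rule Bochner_Integration.integral_cong[OF refl])
    fix \<omega> assume \<omega>: "\<omega> \<in> space M"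
    have "(\<integral>\<omega>'. F ((W \<omega>, Z n \<omega>), (psi n \<omega>', (\<lambda>j. xi n (Suc j) \<omega>'))) \<partial>M)
        = (\<integral>\<omega>'. W \<omega> * s ^ (\<Sum>j<Z n \<omega> + psi n \<omega>' (Z n \<omega>). xi n (Suc j) \<omega>') \<partial>M)"
      by (simp add: F_def cl[OF \<omega>])
    also have "\<dots> = W \<omega> * (\<integral>\<omega>'. s ^ (\<Sum>j<Z n \<omega> + psi n \<omega>' (Z n \<omega>). xi n (Suc j) \<omega>') \<partial>M)"
      by simp
    also have "\<dots> = W \<omega> * (a ^ Z n \<omega> * (\<integral>\<omega>'. a ^ psi n \<omega>' (Z n \<omega>) \<partial>M))"
      by (simp add: inner[OF s pg])
    finally show "(\<integral>\<omega>'. F ((W \<omega>, Z n \<omega>), (psi n \<omega>', (\<lambda>j. xi n (Suc j) \<omega>'))) \<partial>M) = W \<omega> * (a ^ Z n \<omega> * (\<integral>\<omega>'. a ^ psi n \<omega>' (Z n \<omega>) \<partial>M))" .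
  qed
  also have "(\<integral>\<omega>. F ((W \<omega>, Z n \<omega>), (psi n \<omega>, (\<lambda>j. xi n (Suc j) \<omega>))) \<partial>M) = (\<integral>\<omega>. W \<omega> * s ^ Z (Suc n) \<omega> \<partial>M)"
    by (rule Bochner_Integration.integral_cong[OF refl]) (simp add: F_def cl Z_Suc del: Zproc.simps)
  finally show ?thesis .
qed

end


lemma nat_floor_le_iff: "0 \<le> x \<Longrightarrow> nat \<lfloor>x\<rfloor> \<le> m \<longleftrightarrow> x < real m + 1"
proof -
  assume "0 \<le> x"
  then have "\<lfloor>x\<rfloor> \<ge> 0" by simp
  then have "nat \<lfloor>x\<rfloor> \<le> m \<longleftrightarrow> \<lfloor>x\<rfloor> \<le> int m" by linarith
  also have "\<dots> \<longleftrightarrow> x < real m + 1" by (simp add: floor_le_iff)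
  finally show ?thesis .
qed

lemma nat_floor_eq_iff': "0 \<le> x \<Longrightarrow> nat \<lfloor>x\<rfloor> = j \<longleftrightarrow> real j \<le> x \<and> x < real j + 1"
proof -
  assume "0 \<le> x"
  then have "\<lfloor>x\<rfloor> \<ge> 0" by simp
  then have "nat \<lfloor>x\<rfloor> = j \<longleftrightarrow> \<lfloor>x\<rfloor> = int j" by linarith
  also have "\<dots> \<longleftrightarrow> real j \<le> x \<and> x < real j + 1" by (simp add: floor_eq_iff)
  finally show ?thesis .
qed

lemma nat_floor_diff: "0 \<le> x \<Longrightarrow> 0 \<le> y \<Longrightarrow> real (nat \<lfloor>x + y\<rfloor>) - real (nat \<lfloor>x\<rfloor>) \<le> y + 1"
proof -
  assume "0 \<le> x" "0 \<le> y"
  then have "real (nat \<lfloor>x + y\<rfloor>) = real_of_int \<lfloor>x + y\<rfloor>" "real (nat \<lfloor>x\<rfloor>) = real_of_int \<lfloor>x\<rfloor>" by auto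
  moreover have "real_of_int \<lfloor>x + y\<rfloor> \<le> x + y" "x < real_of_int \<lfloor>x\<rfloor> + 1" by linarith+
  ultimately show ?thesis by linarith
qed

lemma sum_if_telescope:
  fixes f :: "nat \<Rightarrow> real"
  assumes "a \<le> b" "b \<le> M0"
  shows "(\<Sum>m<M0. (if a \<le> m \<and> m < b then 1 else 0) * (f (Suc m) - f m)) = f b - f a"
proof -
  have "(\<Sum>m<M0. (if a \<le> m \<and> m < b then 1 else 0) * (f (Suc m) - f m)) = (\<Sum>m\<in>{m\<in>{..<M0}. a \<le> m \<and> m < b}. f (Suc m) - f m)"
  proof -
    have "(\<Sum>m<M0. (if a \<le> m \<and> m < b then 1 else 0) * (f (Suc m) - f m)) = (\<Sum>m<M0. (if a \<le> m \<and> m < b then f (Suc m) - f m else 0))"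
      by (intro sum.cong) auto
    also have "\<dots> = (\<Sum>m\<in>{m\<in>{..<M0}. a \<le> m \<and> m < b}. f (Suc m) - f m)"
      by (rule sum.inter_filter[symmetric]) simp
    finally show ?thesis .
  qed
  also have "{m\<in>{..<M0}. a \<le> m \<and> m < b} = {a..<b}" using assms by auto
  also have "(\<Sum>m\<in>{a..<b}. f (Suc m) - f m) = f b - f a" by (rule sum_Suc_diff'[OF assms(1)])
  finally show ?thesis .
qed

lemma sum_if_count:
  assumes "a \<le> b" "b \<le> M0"
  shows "(\<Sum>m<M0. (if a \<le> m \<and> m < b then 1 else 0 :: real)) = real b - real a"
  using sum_if_telescope[OF assms, of real] by simp


context bpdi begin
lemma hh_meas: "(\<lambda>\<omega>. (\<integral>\<omega>'. (a::real) ^ psi n \<omega>' (Z m \<omega>) \<partial>M)) \<in> borel_measurable (HH m)"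
  by (rule measurable_compose_countable[where f="\<lambda>z \<omega>. (\<integral>\<omega>'. a ^ psi n \<omega>' z \<partial>M)", OF _ Z_HH]) auto

lemma incr_bound:
  fixes s a \<epsilon> :: real and W :: "'a \<Rightarrow> real"
  assumes s: "0 \<le> s" "s \<le> 1" and pg: "\<And>i. 1 \<le> i \<Longrightarrow> (\<integral>\<omega>. s ^ xi m i \<omega> \<partial>M) = a"
    and bnd: "\<And>z. \<bar>a ^ z * (\<integral>\<omega>'. a ^ psi m \<omega>' z \<partial>M) - s ^ z\<bar> \<le> \<epsilon>"
    and Wm: "W \<in> borel_measurable (HH m)" and Wb: "\<And>\<omega>. \<omega> \<in> space M \<Longrightarrow> \<bar>W \<omega>\<bar> \<le> 1"
  shows "\<bar>\<integral>\<omega>. W \<omega> * (s ^ Z (Suc m) \<omega> - s ^ Z m \<omega>) \<partial>M\<bar> \<le> \<epsilon> * (\<integral>\<omega>. \<bar>W \<omega>\<bar> \<partial>M)"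
proof -
  have WM: "W \<in> borel_measurable M" by (rule measurable_from_subalg[OF subalg_HH Wm])
  have ZM: "Z j \<in> measurable M (count_space UNIV)" for j by (rule Z_M)
  have hM: "(\<lambda>\<omega>. (\<integral>\<omega>'. a ^ psi m \<omega>' (Z m \<omega>) \<partial>M)) \<in> borel_measurable M"
    by (rule measurable_from_subalg[OF subalg_HH hh_meas])
  have i1: "integrable M (\<lambda>\<omega>. W \<omega> * s ^ Z j \<omega>)" for j
  proof (rule integrable_const_bound[where B=1])
    show "AE x in M. norm (W x * s ^ Z j x) \<le> 1"
      using Wb s by (auto simp: abs_mult intro!: mult_le_one power_le_one)
  qed (use WM ZM in measurable)
  have e0: "0 \<le> \<epsilon>" using bnd[of 0] by linarith
  have i2: "integrable M (\<lambda>\<omega>. W \<omega> * (a ^ Z m \<omega> * (\<integral>\<omega>'. a ^ psi m \<omega>' (Z m \<omega>) \<partial>M) - s ^ Z m \<omega>))"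
  proof (rule integrable_const_bound[where B=\<epsilon>])
    show "AE x in M. norm (W x * (a ^ Z m x * (\<integral>\<omega>'. a ^ psi m \<omega>' (Z m x) \<partial>M) - s ^ Z m x)) \<le> \<epsilon>"
    proof (intro AE_I2)
      fix x assume x: "x \<in> space M"
      have "\<bar>W x\<bar> * \<bar>a ^ Z m x * (\<integral>\<omega>'. a ^ psi m \<omega>' (Z m x) \<partial>M) - s ^ Z m x\<bar> \<le> 1 * \<epsilon>"
        using Wb[OF x] bnd[of "Z m x"] by (intro mult_mono) auto
      then show "norm (W x * (a ^ Z m x * (\<integral>\<omega>'. a ^ psi m \<omega>' (Z m x) \<partial>M) - s ^ Z m x)) \<le> \<epsilon>"
        by (simp add: abs_mult)
    qed
  qed (use WM ZM hM in measurable)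
  have iW: "integrable M (\<lambda>\<omega>. \<bar>W \<omega>\<bar>)"
    by (rule integrable_const_bound[where B=1]) (use Wb WM in auto)
  have eq: "(\<integral>\<omega>. W \<omega> * (s ^ Z (Suc m) \<omega> - s ^ Z m \<omega>) \<partial>M)
      = (\<integral>\<omega>. W \<omega> * s ^ Z (Suc m) \<omega> \<partial>M) - (\<integral>\<omega>. W \<omega> * s ^ Z m \<omega> \<partial>M)"
    using i1 by (simp add: right_diff_distrib del: Zproc.simps)
  also have "\<dots> = (\<integral>\<omega>. W \<omega> * (a ^ Z m \<omega> * (\<integral>\<omega>'. a ^ psi m \<omega>' (Z m \<omega>) \<partial>M)) \<partial>M) - (\<integral>\<omega>. W \<omega> * s ^ Z m \<omega> \<partial>M)"
    by (subst one_step[OF s pg Wm Wb]) auto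
  also have "\<dots> = (\<integral>\<omega>. W \<omega> * (a ^ Z m \<omega> * (\<integral>\<omega>'. a ^ psi m \<omega>' (Z m \<omega>) \<partial>M) - s ^ Z m \<omega>) \<partial>M)"
  proof -
    have "integrable M (\<lambda>\<omega>. W \<omega> * (a ^ Z m \<omega> * (\<integral>\<omega>'. a ^ psi m \<omega>' (Z m \<omega>) \<partial>M)))"
      using Bochner_Integration.integrable_add[OF i2 i1[of m]] by (simp add: right_diff_distrib)
    then show ?thesis using i1[of m] by (simp add: right_diff_distrib)
  qed
  finally have eq: "(\<integral>\<omega>. W \<omega> * (s ^ Z (Suc m) \<omega> - s ^ Z m \<omega>) \<partial>M) = (\<integral>\<omega>. W \<omega> * (a ^ Z m \<omega> * (\<integral>\<omega>'. a ^ psi m \<omega>' (Z m \<omega>) \<partial>M) - s ^ Z m \<omega>) \<partial>M)" .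
  have "\<bar>\<integral>\<omega>. W \<omega> * (a ^ Z m \<omega> * (\<integral>\<omega>'. a ^ psi m \<omega>' (Z m \<omega>) \<partial>M) - s ^ Z m \<omega>) \<partial>M\<bar> \<le> (\<integral>\<omega>. \<bar>W \<omega> * (a ^ Z m \<omega> * (\<integral>\<omega>'. a ^ psi m \<omega>' (Z m \<omega>) \<partial>M) - s ^ Z m \<omega>)\<bar> \<partial>M)"
    by (rule integral_abs_bound)
  also have "\<dots> \<le> (\<integral>\<omega>. \<epsilon> * \<bar>W \<omega>\<bar> \<partial>M)"
  proof (rule integral_mono)
    show "integrable M (\<lambda>\<omega>. \<bar>W \<omega> * (a ^ Z m \<omega> * (\<integral>\<omega>'. a ^ psi m \<omega>' (Z m \<omega>) \<partial>M) - s ^ Z m \<omega>)\<bar>)"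
      using i2 by (rule integrable_abs)
    show "integrable M (\<lambda>\<omega>. \<epsilon> * \<bar>W \<omega>\<bar>)" using iW by (rule integrable_mult_right)
    fix x assume x: "x \<in> space M"
    have "\<bar>W x\<bar> * \<bar>a ^ Z m x * (\<integral>\<omega>'. a ^ psi m \<omega>' (Z m x) \<partial>M) - s ^ Z m x\<bar> \<le> \<bar>W x\<bar> * \<epsilon>"
      using bnd[of "Z m x"] by (intro mult_left_mono) auto
    then show "\<bar>W x * (a ^ Z m x * (\<integral>\<omega>'. a ^ psi m \<omega>' (Z m x) \<partial>M) - s ^ Z m x)\<bar> \<le> \<epsilon> * \<bar>W x\<bar>"
      by (simp only: abs_mult mult.commute)
  qed
  also have "\<dots> = \<epsilon> * (\<integral>\<omega>. \<bar>W \<omega>\<bar> \<partial>M)" by simp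
  finally show ?thesis unfolding eq .
qed


lemma filt_sub:
  assumes g: "0 < \<gamma>" and u: "\<gamma> * u < real m + 1"
  shows "sets (nat_filtration M (\<lambda>t \<omega>. Yproc k \<gamma> Z t \<omega>) u) \<subseteq> sets (HH m)"
proof -
  let ?G = "{(\<lambda>\<omega>. Yproc k \<gamma> Z t \<omega>) -` A \<inter> space M | t A. 0 \<le> t \<and> t \<le> u \<and> A \<in> sets borel}"
  have "sets (nat_filtration M (\<lambda>t \<omega>. Yproc k \<gamma> Z t \<omega>) u) = sigma_sets (space M) ?G"
    unfolding nat_filtration_def by (intro sets_measure_of) auto
  also have "\<dots> \<subseteq> sets (HH m)"
  proof -
    have "?G \<subseteq> sets (HH m)"
    proof
      fix x assume "x \<in> ?G"
      then obtain t A where x: "x = (\<lambda>\<omega>. Yproc k \<gamma> Z t \<omega>) -` A \<inter> space M" and t: "0 \<le> t" "t \<le> u" and A: "A \<in> sets borel"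
        by auto
      have "\<gamma> * t \<le> \<gamma> * u" using g t by (intro mult_left_mono) auto
      then have "\<gamma> * t < real m + 1" using u by linarith
      then have "\<lfloor>\<gamma> * t\<rfloor> \<le> int m" unfolding floor_le_iff by simp
      then have "nat \<lfloor>\<gamma> * t\<rfloor> \<le> m" by linarith
      then have "Z (nat \<lfloor>\<gamma> * t\<rfloor>) \<in> measurable (HH m) (count_space UNIV)" by (rule Z_HH)
      then have "(\<lambda>\<omega>. Yproc k \<gamma> Z t \<omega>) \<in> borel_measurable (HH m)"
        unfolding Yproc_def by measurable
      from measurable_sets[OF this A] show "x \<in> sets (HH m)" by (simp add: x)
    qed
    then show ?thesis using sets.sigma_sets_subset[of ?G "HH m"] by simp
  qed
  finally show ?thesis .
qed

lemma lt_sets: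
  assumes g: "0 < \<gamma>" and st: "stopping_time (nat_filtration M (\<lambda>t \<omega>. Yproc k \<gamma> Z t \<omega>)) \<tau>"
    and t: "\<gamma> * t \<le> real m + 1"
  shows "{\<omega> \<in> space M. \<tau> \<omega> < t} \<in> sets (HH m)"
proof -
  have eq: "{\<omega> \<in> space M. \<tau> \<omega> < t} = (\<Union>r. {\<omega> \<in> space M. \<tau> \<omega> \<le> t - 1 / Suc r})"
  proof safe
    fix \<omega> assume "\<omega> \<in> space M" "\<tau> \<omega> < t"
    then obtain r where "1 / Suc r < t - \<tau> \<omega>"
      using reals_Archimedean[of "t - \<tau> \<omega>"] by (auto simp: inverse_eq_divide)
    then show "\<omega> \<in> (\<Union>r. {\<omega> \<in> space M. \<tau> \<omega> \<le> t - 1 / Suc r})" using \<open>\<omega> \<in> space M\<close>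
      by (intro UN_I[of r]) auto
  next
    fix \<omega> r assume "\<tau> \<omega> \<le> t - 1 / Suc r"
    moreover have "0 < 1 / real (Suc r)" by simp
    ultimately show "\<tau> \<omega> < t" by linarith
  qed
  have "{\<omega> \<in> space M. \<tau> \<omega> \<le> t - 1 / Suc r} \<in> sets (HH m)" for r
  proof -
    let ?u = "t - 1 / Suc r"
    have "{\<omega> \<in> space (nat_filtration M (\<lambda>t \<omega>. Yproc k \<gamma> Z t \<omega>) ?u). \<tau> \<omega> \<le> ?u} \<in> sets (nat_filtration M (\<lambda>t \<omega>. Yproc k \<gamma> Z t \<omega>) ?u)"
      using stopping_timeD[OF st, of ?u] by (simp add: pred_def)
    moreover have "space (nat_filtration M (\<lambda>t \<omega>. Yproc k \<gamma> Z t \<omega>) ?u) = space M"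
      unfolding nat_filtration_def by (intro space_measure_of) auto
    moreover have "\<gamma> * ?u < real m + 1"
    proof -
      have "\<gamma> * ?u = \<gamma> * t - \<gamma> / Suc r" by (simp add: right_diff_distrib)
      moreover have "0 < \<gamma> / Suc r" using g by simp
      ultimately show ?thesis using t by linarith
    qed
    ultimately show ?thesis using filt_sub[OF g, of ?u m k] by auto
  qed
  then show ?thesis unfolding eq by (intro sets.countable_UN) auto
qed

end

context bpdi begin

lemma main_bound:
  fixes \<gamma> \<delta> T s a1 a2 \<epsilon>1 \<epsilon>2 :: real and \<tau> :: "'a \<Rightarrow> real" and k :: nat
  assumes g: "0 < \<gamma>" and d: "0 < \<delta>"
    and st: "stopping_time (nat_filtration M (\<lambda>t \<omega>. Yproc k \<gamma> Z t \<omega>)) \<tau>"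
    and tb: "\<And>\<omega>. \<omega> \<in> space M \<Longrightarrow> 0 \<le> \<tau> \<omega> \<and> \<tau> \<omega> + \<delta> \<le> T"
    and s: "0 \<le> s" "s \<le> 1"
    and pg1: "\<And>n i. 1 \<le> i \<Longrightarrow> (\<integral>\<omega>. s ^ xi n i \<omega> \<partial>M) = a1"
    and pg2: "\<And>n i. 1 \<le> i \<Longrightarrow> (\<integral>\<omega>. (s^2) ^ xi n i \<omega> \<partial>M) = a2"
    and b1: "\<And>n z. \<bar>a1 ^ z * (\<integral>\<omega>'. a1 ^ psi n \<omega>' z \<partial>M) - s ^ z\<bar> \<le> \<epsilon>1"
    and b2: "\<And>n z. \<bar>a2 ^ z * (\<integral>\<omega>'. a2 ^ psi n \<omega>' z \<partial>M) - (s^2) ^ z\<bar> \<le> \<epsilon>2"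
  shows "(\<integral>\<omega>. (s ^ Z (nat \<lfloor>\<gamma> * (\<tau> \<omega> + \<delta>)\<rfloor>) \<omega> - s ^ Z (nat \<lfloor>\<gamma> * \<tau> \<omega>\<rfloor>) \<omega>)^2 \<partial>M)
          \<le> (\<epsilon>2 + 2 * \<epsilon>1) * (\<gamma> * \<delta> + 1)"
proof -
  define \<sigma> where "\<sigma> \<omega> = nat \<lfloor>\<gamma> * \<tau> \<omega>\<rfloor>" for \<omega>
  define N where "N \<omega> = nat \<lfloor>\<gamma> * (\<tau> \<omega> + \<delta>)\<rfloor>" for \<omega>
  define M0 where "M0 = nat \<lfloor>\<gamma> * T\<rfloor> + 1"
  define I where "I m \<omega> = (if \<sigma> \<omega> \<le> m \<and> m < N \<omega> then 1 else 0 :: real)" for m \<omega>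
  define W where "W m \<omega> = I m \<omega> * s ^ Z (\<sigma> \<omega>) \<omega>" for m \<omega>
  define D where "D j = {\<omega>\<in>space M. \<tau> \<omega> < (real j + 1) / \<gamma>} - {\<omega>\<in>space M. \<tau> \<omega> < real j / \<gamma>}" for j
  have e1: "0 \<le> \<epsilon>1" using b1[of 0 0] by linarith
  have e2: "0 \<le> \<epsilon>2" using b2[of 0 0] by linarith
  have f1: "\<sigma> \<omega> \<le> m \<longleftrightarrow> \<tau> \<omega> < (real m + 1) / \<gamma>" if "\<omega> \<in> space M" for \<omega> m
  proof -
    have "0 \<le> \<gamma> * \<tau> \<omega>" using tb[OF that] g by simp
    then have "\<sigma> \<omega> \<le> m \<longleftrightarrow> \<gamma> * \<tau> \<omega> < real m + 1" unfolding \<sigma>_def by (rule nat_floor_le_iff)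
    also have "\<dots> \<longleftrightarrow> \<tau> \<omega> < (real m + 1) / \<gamma>" using g by (simp add: pos_less_divide_eq mult.commute)
    finally show ?thesis .
  qed
  have f2: "N \<omega> \<le> m \<longleftrightarrow> \<tau> \<omega> < (real m + 1) / \<gamma> - \<delta>" if "\<omega> \<in> space M" for \<omega> m
  proof -
    have "0 \<le> \<gamma> * (\<tau> \<omega> + \<delta>)" using tb[OF that] g d by simp
    then have "N \<omega> \<le> m \<longleftrightarrow> \<gamma> * (\<tau> \<omega> + \<delta>) < real m + 1" unfolding N_def by (rule nat_floor_le_iff)
    also have "\<dots> \<longleftrightarrow> \<tau> \<omega> + \<delta> < (real m + 1) / \<gamma>" using g by (simp add: pos_less_divide_eq mult.commute)
    finally show ?thesis by linarith
  qed
  have f3: "\<sigma> \<omega> = j \<longleftrightarrow> \<omega> \<in> D j" if "\<omega> \<in> space M" for \<omega> j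
  proof -
    have "0 \<le> \<gamma> * \<tau> \<omega>" using tb[OF that] g by simp
    then have "\<sigma> \<omega> = j \<longleftrightarrow> real j \<le> \<gamma> * \<tau> \<omega> \<and> \<gamma> * \<tau> \<omega> < real j + 1" unfolding \<sigma>_def by (rule nat_floor_eq_iff')
    also have "\<dots> \<longleftrightarrow> \<not> \<tau> \<omega> < real j / \<gamma> \<and> \<tau> \<omega> < (real j + 1) / \<gamma>"
      using g by (simp add: pos_less_divide_eq pos_divide_less_eq mult.commute not_less)
    finally show ?thesis using that by (auto simp: D_def)
  qed
  have Dm: "D j \<in> sets (HH m)" if "j \<le> m" for j m
  proof -
    have "{\<omega>\<in>space M. \<tau> \<omega> < (real j + 1) / \<gamma>} \<in> sets (HH m)"
      by (rule lt_sets[OF g st]) (use g that in simp)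
    moreover have "{\<omega>\<in>space M. \<tau> \<omega> < real j / \<gamma>} \<in> sets (HH m)"
      by (rule lt_sets[OF g st]) (use g that in simp)
    ultimately show ?thesis unfolding D_def by auto
  qed
  have Im: "I m \<in> borel_measurable (HH m)" for m
  proof -
    let ?S = "{\<omega>\<in>space M. \<tau> \<omega> < (real m + 1) / \<gamma>} - {\<omega>\<in>space M. \<tau> \<omega> < (real m + 1) / \<gamma> - \<delta>}"
    have "?S \<in> sets (HH m)"
    proof -
      have "{\<omega>\<in>space M. \<tau> \<omega> < (real m + 1) / \<gamma>} \<in> sets (HH m)"
        by (rule lt_sets[OF g st]) (use g in simp)
      moreover have "{\<omega>\<in>space M. \<tau> \<omega> < (real m + 1) / \<gamma> - \<delta>} \<in> sets (HH m)"
        by (rule lt_sets[OF g st]) (use g d in \<open>simp add: right_diff_distrib\<close>)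
      ultimately show ?thesis by auto
    qed
    then have "indicator ?S \<in> borel_measurable (HH m)" by simp
    moreover have "indicator ?S \<omega> = I m \<omega>" if "\<omega> \<in> space (HH m)" for \<omega>
    proof -
      have \<omega>: "\<omega> \<in> space M" using that by simp
      have "(\<sigma> \<omega> \<le> m \<and> m < N \<omega>) \<longleftrightarrow> (\<tau> \<omega> < (real m + 1) / \<gamma> \<and> \<not> \<tau> \<omega> < (real m + 1) / \<gamma> - \<delta>)"
        using f1[OF \<omega>, of m] f2[OF \<omega>, of m] by (simp add: not_le[symmetric])
      then show ?thesis using \<omega> by (simp add: I_def indicator_def)
    qed
    ultimately show ?thesis by (rule measurable_cong[THEN iffD1, rotated])
  qed
  have Wm: "W m \<in> borel_measurable (HH m)" for m
  proof -
    have "(\<lambda>\<omega>. I m \<omega> * (\<Sum>j\<in>{..m}. indicator (D j) \<omega> * s ^ Z j \<omega>)) \<in> borel_measurable (HH m)"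
    proof (rule borel_measurable_times[OF Im], rule borel_measurable_sum)
      fix j assume "j \<in> {..m}"
      then have "D j \<in> sets (HH m)" "Z j \<in> measurable (HH m) (count_space UNIV)" by (auto intro: Dm Z_HH)
      then show "(\<lambda>\<omega>. indicator (D j) \<omega> * s ^ Z j \<omega>) \<in> borel_measurable (HH m)" by measurable
    qed
    moreover have "I m \<omega> * (\<Sum>j\<in>{..m}. indicator (D j) \<omega> * s ^ Z j \<omega>) = W m \<omega>" if "\<omega> \<in> space (HH m)" for \<omega>
    proof (cases "\<sigma> \<omega> \<le> m \<and> m < N \<omega>")
      case True
      have "(\<Sum>j\<in>{..m}. indicator (D j) \<omega> * s ^ Z j \<omega>) = (\<Sum>j\<in>{..m}. (if \<sigma> \<omega> = j then s ^ Z j \<omega> else 0))"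
        using f3 that by (intro sum.cong) (auto simp: indicator_def)
      also have "\<dots> = s ^ Z (\<sigma> \<omega>) \<omega>" using True by (simp add: sum.delta)
      finally show ?thesis by (simp add: W_def)
    next
      case False
      then have "I m \<omega> = 0" by (simp add: I_def)
      then show ?thesis by (simp add: W_def)
    qed
    ultimately show ?thesis by (rule measurable_cong[THEN iffD1, rotated])
  qed
  have I01: "0 \<le> I m \<omega>" "I m \<omega> \<le> 1" for m \<omega> by (auto simp: I_def)
  have WI: "\<bar>W m \<omega>\<bar> \<le> I m \<omega>" for m \<omega>
  proof -
    have "\<bar>s ^ Z (\<sigma> \<omega>) \<omega>\<bar> \<le> 1" using s by (simp add: power_le_one)
    then have "I m \<omega> * \<bar>s ^ Z (\<sigma> \<omega>) \<omega>\<bar> \<le> I m \<omega> * 1" using I01 by (intro mult_left_mono) auto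
    then show ?thesis by (simp add: W_def abs_mult I01)
  qed
  have W1: "\<bar>W m \<omega>\<bar> \<le> 1" for m \<omega> using WI[of m \<omega>] I01[of m \<omega>] by linarith
  have IM: "I m \<in> borel_measurable M" for m by (rule measurable_from_subalg[OF subalg_HH Im])
  have WM: "W m \<in> borel_measurable M" for m by (rule measurable_from_subalg[OF subalg_HH Wm])
  have ZM: "Z j \<in> measurable M (count_space UNIV)" for j by (rule Z_M)
  have s2: "0 \<le> s^2" "s^2 \<le> 1" using s by (auto simp: power_le_one)
  have sN: "\<sigma> \<omega> \<le> N \<omega>" "N \<omega> \<le> M0" if "\<omega> \<in> space M" for \<omega>
  proof -
    have t: "0 \<le> \<tau> \<omega>" "\<tau> \<omega> + \<delta> \<le> T" using tb[OF that] by auto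
    have "\<gamma> * \<tau> \<omega> \<le> \<gamma> * (\<tau> \<omega> + \<delta>)" using g d by simp
    then show "\<sigma> \<omega> \<le> N \<omega>" unfolding \<sigma>_def N_def by (intro nat_mono floor_mono)
    have "\<gamma> * (\<tau> \<omega> + \<delta>) \<le> \<gamma> * T" using g t by simp
    then have "N \<omega> \<le> nat \<lfloor>\<gamma> * T\<rfloor>" unfolding N_def by (intro nat_mono floor_mono)
    then show "N \<omega> \<le> M0" by (simp add: M0_def)
  qed
  have pw01: "\<bar>u ^ p - u ^ q\<bar> \<le> 1" if "0 \<le> u" "u \<le> (1::real)" for u p q
  proof -
    have "0 \<le> u ^ p" "u ^ p \<le> 1" "0 \<le> u ^ q" "u ^ q \<le> 1" using that by (auto simp: power_le_one)
    then show ?thesis by linarith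
  qed
  have pw_pow: "((s::real) ^ n)^2 = (s^2) ^ n" for n :: nat
    by (simp add: power_mult[symmetric] mult.commute)
  define A where "A \<omega> = (\<Sum>m<M0. I m \<omega> * ((s^2) ^ Z (Suc m) \<omega> - (s^2) ^ Z m \<omega>))" for \<omega>
  define B where "B \<omega> = (\<Sum>m<M0. W m \<omega> * (s ^ Z (Suc m) \<omega> - s ^ Z m \<omega>))" for \<omega>
  have pt: "(s ^ Z (N \<omega>) \<omega> - s ^ Z (\<sigma> \<omega>) \<omega>)^2 = A \<omega> - 2 * B \<omega>" if "\<omega> \<in> space M" for \<omega>
  proof -
    have "A \<omega> = (s^2) ^ Z (N \<omega>) \<omega> - (s^2) ^ Z (\<sigma> \<omega>) \<omega>"
      unfolding A_def I_def using sum_if_telescope[OF sN[OF that], of "\<lambda>m. (s^2) ^ Z m \<omega>"] by simp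
    moreover have "B \<omega> = s ^ Z (\<sigma> \<omega>) \<omega> * (s ^ Z (N \<omega>) \<omega> - s ^ Z (\<sigma> \<omega>) \<omega>)"
    proof -
      have "B \<omega> = s ^ Z (\<sigma> \<omega>) \<omega> * (\<Sum>m<M0. I m \<omega> * (s ^ Z (Suc m) \<omega> - s ^ Z m \<omega>))"
        unfolding B_def W_def sum_distrib_left by (intro sum.cong) auto
      also have "(\<Sum>m<M0. I m \<omega> * (s ^ Z (Suc m) \<omega> - s ^ Z m \<omega>)) = s ^ Z (N \<omega>) \<omega> - s ^ Z (\<sigma> \<omega>) \<omega>"
        unfolding I_def using sum_if_telescope[OF sN[OF that], of "\<lambda>m. s ^ Z m \<omega>"] by simp
      finally show ?thesis .
    qed
    ultimately show ?thesis by (simp add: pw_pow[symmetric] power2_eq_square algebra_simps)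
  qed
  have intA: "integrable M (\<lambda>\<omega>. I m \<omega> * ((s^2) ^ Z (Suc m) \<omega> - (s^2) ^ Z m \<omega>))" for m
  proof (rule integrable_const_bound[where B=1])
    show "AE x in M. norm (I m x * ((s^2) ^ Z (Suc m) x - (s^2) ^ Z m x)) \<le> 1"
    proof (intro AE_I2)
      fix x
      have "\<bar>(s^2) ^ Z (Suc m) x - (s^2) ^ Z m x\<bar> \<le> 1"
        using pw01[OF s2] .
      then have "I m x * \<bar>(s^2) ^ Z (Suc m) x - (s^2) ^ Z m x\<bar> \<le> 1 * 1"
        using I01 by (intro mult_mono) auto
      then show "norm (I m x * ((s^2) ^ Z (Suc m) x - (s^2) ^ Z m x)) \<le> 1"
        by (simp add: abs_mult I01)
    qed
  qed (use IM ZM in measurable)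
  have intB: "integrable M (\<lambda>\<omega>. W m \<omega> * (s ^ Z (Suc m) \<omega> - s ^ Z m \<omega>))" for m
  proof (rule integrable_const_bound[where B=1])
    show "AE x in M. norm (W m x * (s ^ Z (Suc m) x - s ^ Z m x)) \<le> 1"
    proof (intro AE_I2)
      fix x
      have "\<bar>s ^ Z (Suc m) x - s ^ Z m x\<bar> \<le> 1"
        using pw01[OF s] .
      moreover have "\<bar>W m x\<bar> \<le> 1" using WI[of m x] I01[of m x] by linarith
      ultimately have "\<bar>W m x\<bar> * \<bar>s ^ Z (Suc m) x - s ^ Z m x\<bar> \<le> 1 * 1"
        by (intro mult_mono) auto
      then show "norm (W m x * (s ^ Z (Suc m) x - s ^ Z m x)) \<le> 1"
        by (simp add: abs_mult)
    qed
  qed (use WM ZM in measurable)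
  have intI: "integrable M (I m)" for m
    by (rule integrable_const_bound[where B=1]) (use I01 IM in auto)
  have "(\<integral>\<omega>. (s ^ Z (N \<omega>) \<omega> - s ^ Z (\<sigma> \<omega>) \<omega>)^2 \<partial>M) = (\<integral>\<omega>. A \<omega> - 2 * B \<omega> \<partial>M)"
    by (rule Bochner_Integration.integral_cong[OF refl]) (rule pt)
  also have "\<dots> = (\<integral>\<omega>. A \<omega> \<partial>M) - 2 * (\<integral>\<omega>. B \<omega> \<partial>M)"
  proof -
    have iA: "integrable M A" unfolding A_def by (intro Bochner_Integration.integrable_sum intA)
    have iB: "integrable M B" unfolding B_def by (intro Bochner_Integration.integrable_sum intB)
    show ?thesis using iA iB by simp
  qed
  also have "(\<integral>\<omega>. A \<omega> \<partial>M) = (\<Sum>m<M0. (\<integral>\<omega>. I m \<omega> * ((s^2) ^ Z (Suc m) \<omega> - (s^2) ^ Z m \<omega>) \<partial>M))"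
    unfolding A_def by (intro Bochner_Integration.integral_sum intA)
  also have "(\<integral>\<omega>. B \<omega> \<partial>M) = (\<Sum>m<M0. (\<integral>\<omega>. W m \<omega> * (s ^ Z (Suc m) \<omega> - s ^ Z m \<omega>) \<partial>M))"
    unfolding B_def by (intro Bochner_Integration.integral_sum intB)
  finally have eq: "(\<integral>\<omega>. (s ^ Z (N \<omega>) \<omega> - s ^ Z (\<sigma> \<omega>) \<omega>)^2 \<partial>M) =
     (\<Sum>m<M0. (\<integral>\<omega>. I m \<omega> * ((s^2) ^ Z (Suc m) \<omega> - (s^2) ^ Z m \<omega>) \<partial>M)) -
     2 * (\<Sum>m<M0. (\<integral>\<omega>. W m \<omega> * (s ^ Z (Suc m) \<omega> - s ^ Z m \<omega>) \<partial>M))" .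
  have bA: "\<bar>\<integral>\<omega>. I m \<omega> * ((s^2) ^ Z (Suc m) \<omega> - (s^2) ^ Z m \<omega>) \<partial>M\<bar> \<le> \<epsilon>2 * (\<integral>\<omega>. I m \<omega> \<partial>M)" for m
  proof -
    have "\<bar>\<integral>\<omega>. I m \<omega> * ((s^2) ^ Z (Suc m) \<omega> - (s^2) ^ Z m \<omega>) \<partial>M\<bar> \<le> \<epsilon>2 * (\<integral>\<omega>. \<bar>I m \<omega>\<bar> \<partial>M)"
      by (rule incr_bound[OF s2 pg2 b2 Im]) (use I01 in auto)
    then show ?thesis using I01 by simp
  qed
  have bB: "\<bar>\<integral>\<omega>. W m \<omega> * (s ^ Z (Suc m) \<omega> - s ^ Z m \<omega>) \<partial>M\<bar> \<le> \<epsilon>1 * (\<integral>\<omega>. I m \<omega> \<partial>M)" for m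
  proof -
    have "\<bar>\<integral>\<omega>. W m \<omega> * (s ^ Z (Suc m) \<omega> - s ^ Z m \<omega>) \<partial>M\<bar> \<le> \<epsilon>1 * (\<integral>\<omega>. \<bar>W m \<omega>\<bar> \<partial>M)"
      by (rule incr_bound[OF s pg1 b1 Wm]) (use W1 in auto)
    also have "\<dots> \<le> \<epsilon>1 * (\<integral>\<omega>. I m \<omega> \<partial>M)"
    proof (intro mult_left_mono e1 integral_mono intI WI)
      show "integrable M (\<lambda>\<omega>. \<bar>W m \<omega>\<bar>)"
        by (rule integrable_const_bound[where B=1]) (use W1 WM in auto)
    qed
    finally show ?thesis .
  qed
  have sumI: "(\<Sum>m<M0. (\<integral>\<omega>. I m \<omega> \<partial>M)) \<le> \<gamma> * \<delta> + 1"
  proof -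
    have "(\<Sum>m<M0. (\<integral>\<omega>. I m \<omega> \<partial>M)) = (\<integral>\<omega>. (\<Sum>m<M0. I m \<omega>) \<partial>M)"
      by (intro Bochner_Integration.integral_sum[symmetric] intI)
    also have "\<dots> \<le> (\<integral>\<omega>. \<gamma> * \<delta> + 1 \<partial>M)"
    proof (rule integral_mono)
      show "integrable M (\<lambda>\<omega>. \<Sum>m<M0. I m \<omega>)" by (intro Bochner_Integration.integrable_sum intI)
      fix \<omega> assume \<omega>: "\<omega> \<in> space M"
      have "(\<Sum>m<M0. I m \<omega>) = real (N \<omega>) - real (\<sigma> \<omega>)"
        unfolding I_def by (rule sum_if_count[OF sN[OF \<omega>]])
      also have "\<dots> \<le> \<gamma> * \<delta> + 1"
        unfolding N_def \<sigma>_def using nat_floor_diff[of "\<gamma> * \<tau> \<omega>" "\<gamma> * \<delta>"] tb[OF \<omega>] g d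
        by (simp add: distrib_left)
      finally show "(\<Sum>m<M0. I m \<omega>) \<le> \<gamma> * \<delta> + 1" .
    qed simp
    also have "\<dots> = \<gamma> * \<delta> + 1" by (simp add: prob_space)
    finally show ?thesis .
  qed
  have "(\<Sum>m<M0. (\<integral>\<omega>. I m \<omega> * ((s^2) ^ Z (Suc m) \<omega> - (s^2) ^ Z m \<omega>) \<partial>M)) \<le> (\<Sum>m<M0. \<epsilon>2 * (\<integral>\<omega>. I m \<omega> \<partial>M))"
    by (intro sum_mono) (use bA in \<open>auto simp: abs_le_iff\<close>)
  moreover have "- (\<Sum>m<M0. (\<integral>\<omega>. W m \<omega> * (s ^ Z (Suc m) \<omega> - s ^ Z m \<omega>) \<partial>M)) \<le> (\<Sum>m<M0. \<epsilon>1 * (\<integral>\<omega>. I m \<omega> \<partial>M))"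
    unfolding sum_negf[symmetric] by (intro sum_mono) (use bB in \<open>auto simp: abs_le_iff\<close>)
  ultimately have "(\<integral>\<omega>. (s ^ Z (N \<omega>) \<omega> - s ^ Z (\<sigma> \<omega>) \<omega>)^2 \<partial>M) \<le> (\<epsilon>2 + 2 * \<epsilon>1) * (\<Sum>m<M0. (\<integral>\<omega>. I m \<omega> \<partial>M))"
    unfolding eq by (simp add: sum_distrib_left[symmetric] distrib_right)
  also have "\<dots> \<le> (\<epsilon>2 + 2 * \<epsilon>1) * (\<gamma> * \<delta> + 1)"
    by (intro mult_left_mono sumI) (use e1 e2 in simp)
  finally show ?thesis unfolding N_def \<sigma>_def .
qed
end


lemma pow_diff_bound:
  fixes x y b :: real
  assumes "0 \<le> x" "x \<le> b" "0 \<le> y" "y \<le> b"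
  shows "\<bar>x ^ Suc n - y ^ Suc n\<bar> \<le> real (Suc n) * b ^ n * \<bar>x - y\<bar>"
proof (induction n)
  case 0 then show ?case by simp
next
  case (Suc n)
  have "x ^ Suc (Suc n) - y ^ Suc (Suc n) = x * (x ^ Suc n - y ^ Suc n) + y ^ Suc n * (x - y)"
    by (simp add: algebra_simps)
  then have "\<bar>x ^ Suc (Suc n) - y ^ Suc (Suc n)\<bar> \<le> \<bar>x * (x ^ Suc n - y ^ Suc n)\<bar> + \<bar>y ^ Suc n * (x - y)\<bar>"
    by (metis abs_triangle_ineq)
  also have "\<dots> = x * \<bar>x ^ Suc n - y ^ Suc n\<bar> + y ^ Suc n * \<bar>x - y\<bar>"
    using assms by (simp add: abs_mult)
  also have "\<dots> \<le> b * (real (Suc n) * b ^ n * \<bar>x - y\<bar>) + b ^ Suc n * \<bar>x - y\<bar>"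
  proof (intro add_mono mult_mono Suc.IH power_mono)
  qed (use assms in auto)
  also have "\<dots> = real (Suc (Suc n)) * b ^ Suc n * \<bar>x - y\<bar>" by (simp add: algebra_simps)
  finally show ?case .
qed

lemma t_exp_le: "0 \<le> t \<Longrightarrow> t * exp (- t) \<le> (1::real)"
proof -
  assume "0 \<le> t"
  have "t \<le> exp t" using exp_ge_add_one_self[of t] by linarith
  then show ?thesis by (simp add: exp_minus field_simps)
qed

lemma exp_upper_half: "0 \<le> x \<Longrightarrow> x \<le> 1 \<Longrightarrow> exp (- x) \<le> 1 - x / (2::real)"
proof -
  assume x: "0 \<le> x" "x \<le> 1"
  have "1 + x \<le> exp x" by simp
  then have "exp (-x) \<le> 1 / (1 + x)" using x by (simp add: exp_minus field_simps)
  also have "1 / (1 + x) \<le> 1 - x / 2"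
  proof -
    have "x * x \<le> x" using x by (simp add: mult_left_le_one_le)
    then have "1 \<le> (1 - x / 2) * (1 + x)" by (simp add: algebra_simps)
    then show ?thesis using x by (simp add: field_simps)
  qed
  finally show ?thesis .
qed


lemma analytic:
  fixes lam L K1 \<gamma> a H D :: real and k z :: nat
  assumes k: "1 \<le> k" and lam: "0 < lam" "lam \<le> real k" and g: "0 < \<gamma>" "4 * L \<le> \<gamma>"
    and L: "0 \<le> L" and K1: "0 \<le> K1"
    and a: "0 \<le> a" "a \<le> 1"
    and aR: "\<bar>real k * \<gamma> * (a - exp (- lam / real k))\<bar> \<le> L * (real k * (1 - exp (- lam / real k)))"
    and H: "0 \<le> H" "H \<le> 1" "1 - H \<le> D * (1 - a)"
    and Dk: "\<gamma> / real k * D \<le> K1 * (1 + real z / real k)"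
  shows "\<bar>a ^ z * H - exp (- lam / real k) ^ z\<bar> \<le> (6 * L + 2 * K1 * (lam + 1)) / \<gamma>"
proof -
  define x where "x = lam / real k"
  define s where "s = exp (- x)"
  define \<mu> where "\<mu> = real k * (1 - s)"
  have kpos: "0 < real k" using k by simp
  have x01: "0 < x" "x \<le> 1" using lam kpos by (auto simp: x_def)
  have s01: "0 < s" "s \<le> 1" using x01 by (auto simp: s_def)
  have sx: "1 - s \<le> x" using exp_minus_ge[of x] by (simp add: s_def)
  have sx2: "s \<le> 1 - x / 2" using exp_upper_half[OF less_imp_le[OF x01(1)] x01(2)] by (simp add: s_def)
  have lamx: "lam = real k * x" using kpos by (simp add: x_def)
  have mu: "\<mu> \<le> lam" using sx kpos by (simp add: \<mu>_def lamx)
  have es: "exp (- lam / real k) = s" by (simp add: s_def x_def)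
  have as: "\<bar>a - s\<bar> \<le> L * lam / (real k * \<gamma>)"
  proof -
    have aR': "\<bar>real k * \<gamma> * (a - s)\<bar> \<le> L * \<mu>" using aR unfolding es \<mu>_def .
    have "real k * \<gamma> * \<bar>a - s\<bar> \<le> L * \<mu>" using aR' kpos g by (simp add: abs_mult)
    also have "\<dots> \<le> L * lam" using mu L by (intro mult_left_mono) auto
    finally have "real k * \<gamma> * \<bar>a - s\<bar> \<le> L * lam" .
    then show ?thesis using kpos g by (simp add: field_simps)
  qed
  have Lg: "L / \<gamma> \<le> 1 / 4" using g by (simp add: field_simps)
  have as_eq: "L * lam / (real k * \<gamma>) = x * (L / \<gamma>)" using kpos by (simp add: x_def)
  have as2: "\<bar>a - s\<bar> \<le> x / 4"
  proof -
    have "x * (L / \<gamma>) \<le> x * (1/4)" using x01 Lg by (intro mult_left_mono) auto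
    moreover have "\<bar>a - s\<bar> \<le> x * (L / \<gamma>)" using as as_eq by simp
    ultimately show ?thesis by linarith
  qed
  define b where "b = 1 - x / 4"
  have sb: "s \<le> b" using sx2 x01 by (simp add: b_def)
  have ab: "a \<le> b" using abs_le_D1[OF as2] sx2 unfolding b_def by linarith
  have b34: "3/4 \<le> b" "b \<le> 1" using x01 by (auto simp: b_def)
  have bexp: "b \<le> exp (- (x / 4))" using exp_minus_ge[of "x/4"] by (simp add: b_def)
  have T1: "\<bar>a ^ z - s ^ z\<bar> \<le> 6 * L / \<gamma>"
  proof (cases z)
    case 0 then show ?thesis using L g by simp
  next
    case (Suc n)
    have c1: "\<bar>a ^ Suc n - s ^ Suc n\<bar> \<le> real (Suc n) * b ^ n * \<bar>a - s\<bar>"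
      by (rule pow_diff_bound) (use a s01 ab sb in auto)
    have c2: "real (Suc n) * b ^ n \<le> 16 / (3 * x)"
    proof -
      have "b ^ n \<le> (4/3) * b ^ Suc n"
      proof -
        have "(3/4) * b ^ n \<le> b * b ^ n" using b34 by (intro mult_right_mono) auto
        then show ?thesis by simp
      qed
      moreover have "b ^ Suc n \<le> exp (- (x / 4)) ^ Suc n"
        using b34 bexp by (intro power_mono) auto
      moreover have "exp (- (x / 4)) ^ Suc n = exp (- (x * real (Suc n) / 4))"
        by (subst exp_of_nat_mult[symmetric]) (simp add: algebra_simps)
      moreover have "real (Suc n) * exp (- (x * real (Suc n) / 4)) \<le> 4 / x"
      proof -
        have "(x * real (Suc n) / 4) * exp (- (x * real (Suc n) / 4)) \<le> 1"
          by (rule t_exp_le) (use x01 in simp)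
        then show ?thesis using x01 by (simp add: field_simps)
      qed
      ultimately have "real (Suc n) * b ^ n \<le> real (Suc n) * ((4/3) * exp (- (x * real (Suc n) / 4)))"
        by (intro mult_left_mono) auto
      also have "\<dots> = (4/3) * (real (Suc n) * exp (- (x * real (Suc n) / 4)))" by simp
      also have "\<dots> \<le> (4/3) * (4 / x)"
        using \<open>real (Suc n) * exp (- (x * real (Suc n) / 4)) \<le> 4 / x\<close> by simp
      finally show ?thesis by simp
    qed
    have asx: "\<bar>a - s\<bar> \<le> x * (L / \<gamma>)" using as as_eq by simp
    have "0 \<le> x * (L / \<gamma>)" using x01 L g by simp
    have "\<bar>a ^ Suc n - s ^ Suc n\<bar> \<le> 16 / (3 * x) * (x * (L / \<gamma>))"
      using c1 mult_mono[OF c2 asx] x01 b34 by (simp add: zero_le_power)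
    also have "\<dots> = 16 / 3 * (L / \<gamma>)" using x01 by (simp add: field_simps)
    also have "\<dots> \<le> 6 * L / \<gamma>" using L g by (simp add: field_simps)
    finally show ?thesis using Suc by simp
  qed
  have T2: "s ^ z * (1 - H) \<le> 2 * K1 * (lam + 1) / \<gamma>"
  proof (cases "D \<le> 0")
    case True
    then have "1 - H \<le> 0" using H(3) a by (meson mult_nonpos_nonneg order_trans diff_ge_0_iff_ge)
    then have "s ^ z * (1 - H) \<le> 0" using s01 by (simp add: mult_nonneg_nonpos)
    also have "0 \<le> 2 * K1 * (lam + 1) / \<gamma>" using K1 lam g by simp
    finally show ?thesis .
  next
    case False
    have a1: "1 - a \<le> 2 * x" using sx abs_le_D2[OF as2] x01 by linarith
    have h1: "1 - H \<le> D * (2 * x)" using H(3) a1 False by (meson less_eq_real_def mult_left_mono not_le order_trans)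
    have "D = (real k / \<gamma>) * (\<gamma> / real k * D)" using kpos g by (simp add: field_simps)
    also have "\<dots> \<le> (real k / \<gamma>) * (K1 * (1 + real z / real k))" using Dk kpos g by (intro mult_left_mono) auto
    finally have "D \<le> K1 * (1 + real z / real k) * real k / \<gamma>" by (simp add: mult.commute)
    then have "D * (2 * x) \<le> K1 * (1 + real z / real k) * real k / \<gamma> * (2 * x)"
      using x01 by (intro mult_right_mono) auto
    with h1 have "1 - H \<le> K1 * (1 + real z / real k) * real k / \<gamma> * (2 * x)" by linarith
    also have "\<dots> = 2 * lam * K1 * (1 + real z / real k) / \<gamma>" using kpos g by (simp add: x_def field_simps)
    finally have hb: "1 - H \<le> 2 * lam * K1 * (1 + real z / real k) / \<gamma>" .
    have sz: "s ^ z = exp (- (lam * (real z / real k)))"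
      by (simp add: s_def x_def exp_of_nat_mult[symmetric] algebra_simps)
    have key: "(1 + real z / real k) * exp (- (lam * (real z / real k))) \<le> 1 + 1 / lam"
    proof -
      have e1: "exp (- (lam * (real z / real k))) \<le> 1" using lam by simp
      have "(lam * (real z / real k)) * exp (- (lam * (real z / real k))) \<le> 1"
        by (rule t_exp_le) (use lam in simp)
      then have e2: "(real z / real k) * exp (- (lam * (real z / real k))) \<le> 1 / lam"
        using lam by (simp add: field_simps)
      have "(1 + real z / real k) * exp (- (lam * (real z / real k))) = exp (- (lam * (real z / real k))) + (real z / real k) * exp (- (lam * (real z / real k)))"
        by (simp add: distrib_right)
      then show ?thesis using e1 e2 by linarith
    qed
    have "s ^ z * (1 - H) \<le> s ^ z * (2 * lam * K1 * (1 + real z / real k) / \<gamma>)"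
      using hb s01 by (intro mult_left_mono) auto
    also have "\<dots> = (2 * lam * K1 / \<gamma>) * ((1 + real z / real k) * exp (- (lam * (real z / real k))))"
      by (simp add: sz)
    also have "\<dots> \<le> (2 * lam * K1 / \<gamma>) * (1 + 1 / lam)"
      using key K1 lam g by (intro mult_left_mono) auto
    also have "\<dots> = 2 * K1 * (lam + 1) / \<gamma>" using lam g by (simp add: field_simps)
    finally show ?thesis .
  qed
  have "a ^ z * H - s ^ z = (a ^ z - s ^ z) * H - s ^ z * (1 - H)" by (simp add: algebra_simps)
  then have "\<bar>a ^ z * H - s ^ z\<bar> \<le> \<bar>(a ^ z - s ^ z) * H\<bar> + \<bar>s ^ z * (1 - H)\<bar>"
    by (metis abs_triangle_ineq4)
  also have "\<dots> = \<bar>a ^ z - s ^ z\<bar> * H + s ^ z * (1 - H)"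
  proof -
    have "0 \<le> s ^ z" using s01 by simp
    then have "0 \<le> s ^ z * (1 - H)" using H by simp
    then have "\<bar>s ^ z * (1 - H)\<bar> = s ^ z * (1 - H)" by (rule abs_of_nonneg)
    moreover have "\<bar>(a ^ z - s ^ z) * H\<bar> = \<bar>a ^ z - s ^ z\<bar> * H" using H by (simp add: abs_mult)
    ultimately show ?thesis by simp
  qed
  also have "\<dots> \<le> \<bar>a ^ z - s ^ z\<bar> * 1 + s ^ z * (1 - H)"
  proof -
    have "\<bar>a ^ z - s ^ z\<bar> * H \<le> \<bar>a ^ z - s ^ z\<bar> * 1" using H by (intro mult_left_mono) auto
    then show ?thesis by linarith
  qed
  also have "\<dots> \<le> 6 * L / \<gamma> + 2 * K1 * (lam + 1) / \<gamma>" using T1 T2 by simp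
  also have "\<dots> = (6 * L + 2 * K1 * (lam + 1)) / \<gamma>" by (simp add: add_divide_distrib)
  finally show ?thesis unfolding es .
qed



lemma geom_bound: "0 \<le> u \<Longrightarrow> u < (1::real) \<Longrightarrow> (\<Sum>i<p. u ^ i) \<le> 1 / (1 - u)"
proof -
  assume u: "0 \<le> u" "u < 1"
  have "1 - u ^ p = (1 - u) * (\<Sum>i<p. u ^ i)" by (rule one_diff_power_eq)
  then have "(\<Sum>i<p. u ^ i) = (1 - u ^ p) / (1 - u)" using u by (simp add: field_simps)
  also have "\<dots> \<le> 1 / (1 - u)" using u by (intro divide_right_mono) auto
  finally show ?thesis .
qed

lemma pgf_facts:
  fixes X :: "'a \<Rightarrow> nat"
  assumes P: "prob_space M" and Xm: "X \<in> measurable M (count_space UNIV)" and t: "0 \<le> t" "t \<le> 1"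
  shows "0 \<le> pgf M X t" "pgf M X t \<le> 1" "pgf M X 1 = 1"
    and "integrable M (\<lambda>\<omega>. t ^ X \<omega>)"
proof -
  interpret prob_space M by fact
  show int: "integrable M (\<lambda>\<omega>. t ^ X \<omega>)"
    by (rule integrable_const_bound[where B=1]) (use t Xm in \<open>auto simp: power_le_one\<close>)
  show "0 \<le> pgf M X t" unfolding pgf_def using t by (intro integral_nonneg_AE) auto
  have "pgf M X t \<le> (\<integral>\<omega>. 1 \<partial>M)" unfolding pgf_def
    by (intro integral_mono int) (use t in \<open>auto simp: power_le_one\<close>)
  then show "pgf M X t \<le> 1" by (simp add: prob_space)
  show "pgf M X 1 = 1" unfolding pgf_def by (simp add: prob_space)
qed

lemma pgf_quot:
  fixes X :: "'a \<Rightarrow> nat"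
  assumes P: "prob_space M" and Xm: "X \<in> measurable M (count_space UNIV)" and t: "0 \<le> t" "t < 1"
  shows "(1 - pgf M X t) / (1 - t) = (\<integral>\<omega>. (\<Sum>i<X \<omega>. t ^ i) \<partial>M)"
    and "integrable M (\<lambda>\<omega>. (\<Sum>i<X \<omega>. t ^ i))"
proof -
  interpret prob_space M by fact
  show int: "integrable M (\<lambda>\<omega>. (\<Sum>i<X \<omega>. t ^ i))"
  proof (rule integrable_const_bound[where B="1 / (1 - t)"])
    show "AE x in M. norm (\<Sum>i<X x. t ^ i) \<le> 1 / (1 - t)"
      using geom_bound[OF t] t by (auto intro!: AE_I2 simp: sum_nonneg)
    show "(\<lambda>\<omega>. \<Sum>i<X \<omega>. t ^ i) \<in> borel_measurable M"
      by (rule measurable_compose[OF Xm]) simp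
  qed
  have i2: "integrable M (\<lambda>\<omega>. t ^ X \<omega>)" using pgf_facts[OF P Xm, of t] t by simp
  have "1 - pgf M X t = (\<integral>\<omega>. 1 - t ^ X \<omega> \<partial>M)"
    unfolding pgf_def using i2 by (simp add: prob_space)
  also have "\<dots> = (\<integral>\<omega>. (1 - t) * (\<Sum>i<X \<omega>. t ^ i) \<partial>M)"
    by (simp add: one_diff_power_eq)
  also have "\<dots> = (1 - t) * (\<integral>\<omega>. (\<Sum>i<X \<omega>. t ^ i) \<partial>M)" by simp
  finally show "(1 - pgf M X t) / (1 - t) = (\<integral>\<omega>. (\<Sum>i<X \<omega>. t ^ i) \<partial>M)"
    using t by simp
qed

lemma pgf_bound:
  fixes X :: "'a \<Rightarrow> nat"
  assumes P: "prob_space M" and Xm: "X \<in> measurable M (count_space UNIV)"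
    and f: "\<And>t. 0 \<le> t \<Longrightarrow> t \<le> 1 \<Longrightarrow> pgf M X t = f t"
    and D: "(f has_real_derivative D) (at 1 within {0..1})"
    and t: "0 \<le> t" "t \<le> 1"
  shows "1 - f t \<le> D * (1 - t)"
proof (cases "t = 1")
  case True
  then show ?thesis using f[of 1] pgf_facts[OF P Xm, of 1] by simp
next
  case False
  then have t1: "t < 1" using t by simp
  have lim: "((\<lambda>y. (f y - f 1) / (y - 1)) \<longlongrightarrow> D) (at_left 1)"
    using D unfolding has_field_derivative_iff by (simp add: at_within_Icc_at_left)
  have ev: "eventually (\<lambda>u. (1 - f t) / (1 - t) \<le> (f u - f 1) / (u - 1)) (at_left (1::real))"
    unfolding eventually_at_left_field
  proof (intro exI[of _ t] conjI allI impI)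
    show "t < 1" by fact
    fix u assume u1: "t < u" and u2: "u < 1"
    have u: "t < u \<and> u < 1" using u1 u2 by simp
    have "(1 - f t) / (1 - t) = (\<integral>\<omega>. (\<Sum>i<X \<omega>. t ^ i) \<partial>M)"
      using pgf_quot(1)[OF P Xm t(1) t1] f[OF t] by simp
    also have "\<dots> \<le> (\<integral>\<omega>. (\<Sum>i<X \<omega>. u ^ i) \<partial>M)"
    proof (rule integral_mono)
      show "integrable M (\<lambda>\<omega>. \<Sum>i<X \<omega>. t ^ i)" by (rule pgf_quot(2)[OF P Xm t(1) t1])
      show "integrable M (\<lambda>\<omega>. \<Sum>i<X \<omega>. u ^ i)" by (rule pgf_quot(2)[OF P Xm]) (use u t in auto)
      fix \<omega> show "(\<Sum>i<X \<omega>. t ^ i) \<le> (\<Sum>i<X \<omega>. u ^ i)"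
        using u t by (intro sum_mono power_mono) auto
    qed
    also have "\<dots> = (1 - f u) / (1 - u)"
      using pgf_quot(1)[OF P Xm, of u] f[of u] u t by simp
    also have "\<dots> = (f u - f 1) / (u - 1)"
      using f[of 1] pgf_facts[OF P Xm, of 1] u by (simp add: field_simps)
    finally show "(1 - f t) / (1 - t) \<le> (f u - f 1) / (u - 1)" .
  qed
  have "(1 - f t) / (1 - t) \<le> D"
    by (rule tendsto_lowerbound[OF lim ev]) simp
  then show ?thesis using t1 by (simp add: field_simps)
qed




theorem lemma3p3:
  fixes M :: "nat \<Rightarrow> 'a measure"
    and xi :: "nat \<Rightarrow> nat \<Rightarrow> nat \<Rightarrow> 'a \<Rightarrow> nat"          \<comment> \<open>xi k n i\<close>
    and psi :: "nat \<Rightarrow> nat \<Rightarrow> 'a \<Rightarrow> nat \<Rightarrow> nat"         \<comment> \<open>psi k n \<omega> i\<close>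
    and Z0 :: "nat \<Rightarrow> 'a \<Rightarrow> nat"
    and g :: "nat \<Rightarrow> real \<Rightarrow> real"
    and h :: "nat \<Rightarrow> nat \<Rightarrow> real \<Rightarrow> real"                \<comment> \<open>h k i = h_k^(i)\<close>
    and \<gamma> :: "nat \<Rightarrow> real"
    and b c K :: real
    and m \<pi> :: "real measure"
    and \<beta> :: "real \<Rightarrow> real"
    and q :: "real \<Rightarrow> real \<Rightarrow> real"
    and r :: "real \<Rightarrow> real"
    and T :: real
    and \<delta> :: "nat \<Rightarrow> real"
    and \<tau> :: "nat \<Rightarrow> 'a \<Rightarrow> real"
    and lam :: real
  defines "PS \<equiv> PiM (UNIV :: nat set) (\<lambda>_. count_space (UNIV :: nat set))"
  defines "Z \<equiv> (\<lambda>k. Zproc (xi k) (psi k) (Z0 k))"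
  defines "Y \<equiv> (\<lambda>k t \<omega>. Yproc k (\<gamma> k) (Z k) t \<omega>)"
  assumes prob: "\<And>k. 1 \<le> k \<Longrightarrow> prob_space (M k)"
    and xi_meas: "\<And>k n i. 1 \<le> k \<Longrightarrow> xi k n i \<in> measurable (M k) (count_space UNIV)"
    and psi_meas: "\<And>k n. 1 \<le> k \<Longrightarrow> psi k n \<in> measurable (M k) PS"
    and Z0_meas: "\<And>k. 1 \<le> k \<Longrightarrow> Z0 k \<in> measurable (M k) (count_space UNIV)"
    and indep: "\<And>k. 1 \<le> k \<Longrightarrow> prob_space.indep_sets (M k)
        (\<lambda>j. case j of
               Off n i \<Rightarrow> {xi k n i -` A \<inter> space (M k) | A. True}
             | Imm n \<Rightarrow> {psi k n -` A \<inter> space (M k) | A. A \<in> sets PS}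
             | Init \<Rightarrow> {Z0 k -` A \<inter> space (M k) | A. True})
        ({Off n i | n i. 1 \<le> i} \<union> range Imm \<union> {Init})"
    and xi_pgf: "\<And>k n i s. 1 \<le> k \<Longrightarrow> 1 \<le> i \<Longrightarrow> 0 \<le> s \<Longrightarrow> s \<le> 1 \<Longrightarrow>
        pgf (M k) (xi k n i) s = g k s"
    and psi_ident: "\<And>k n. 1 \<le> k \<Longrightarrow> distr (M k) PS (psi k n) = distr (M k) PS (psi k 0)"
    and psi_pgf: "\<And>k n i s. 1 \<le> k \<Longrightarrow> 0 \<le> s \<Longrightarrow> s \<le> 1 \<Longrightarrow>
        pgf (M k) (\<lambda>\<omega>. psi k n \<omega> i) s = h k i s"
    and \<gamma>_pos: "\<And>k. 0 < \<gamma> k"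
    and \<gamma>_mono: "mono \<gamma>"
    and \<gamma>_lim: "filterlim \<gamma> at_top sequentially"
    \<comment> \<open>parameters\<close>
    and c_nonneg: "0 \<le> c"
    and m_sets: "sets m = sets borel" and m_supp: "emeasure m {..0} = 0"
    and m_int: "(\<integral>\<^sup>+ z. ennreal (min z (z^2)) \<partial>m) < \<infinity>"
    and \<pi>_sf: "sigma_finite_measure \<pi>"
    and \<pi>_sets: "sets \<pi> = sets borel" and \<pi>_supp: "emeasure \<pi> {..0} = 0"
    and \<beta>_meas: "\<beta> \<in> borel_measurable borel" and \<beta>_nonneg: "\<And>x. 0 \<le> \<beta> x"
    and q_meas: "(\<lambda>(x, z). q x z) \<in> borel_measurable borel"
    and q_nonneg: "\<And>x z. 0 \<le> q x z"
    and S1: "\<And>x. 0 \<le> x \<Longrightarrow>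
        ennreal \<bar>\<beta> x\<bar> + (\<integral>\<^sup>+ z. ennreal (q x z * z) \<partial>\<pi>) \<le> ennreal (K * (1 + x))"
    and S2: "\<And>x y. 0 \<le> x \<Longrightarrow> 0 \<le> y \<Longrightarrow>
        ennreal \<bar>\<beta> x - \<beta> y\<bar> + (\<integral>\<^sup>+ z. ennreal (\<bar>q x z - q y z\<bar> * z) \<partial>\<pi>)
          \<le> ennreal (r \<bar>x - y\<bar>)"
    and r_nonneg: "\<And>x. 0 \<le> x \<Longrightarrow> 0 \<le> r x"
    and r_mono: "mono_on {0..} r"
    and r_concave: "concave_on {0..} r"
    and r_int: "\<And>\<epsilon>. 0 < \<epsilon> \<Longrightarrow>
        (\<integral>\<^sup>+ z \<in> {0<..\<epsilon>}. inverse (ennreal (r z)) \<partial>lborel) = \<infinity>"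
    \<comment> \<open>condition (A)\<close>
    and A_lip: "\<And>a. 0 < a \<Longrightarrow> \<exists>L. \<forall>k\<ge>1. \<forall>l1 l2.
        0 \<le> l1 \<and> l1 \<le> min a (real k) \<and> 0 \<le> l2 \<and> l2 \<le> min a (real k) \<longrightarrow>
        \<bar>Rk (g k) k (\<gamma> k) l1 - Rk (g k) k (\<gamma> k) l2\<bar> \<le> L * \<bar>l1 - l2\<bar>"
    and A_lim: "\<And>l. 0 \<le> l \<Longrightarrow> (\<lambda>k. Rk (g k) k (\<gamma> k) l) \<longlonglongrightarrow> Rfun b c m l"
    \<comment> \<open>condition (B)\<close>
    and B: "\<And>a1 a2 \<epsilon>. 0 < a1 \<Longrightarrow> 0 < a2 \<Longrightarrow> 0 < \<epsilon> \<Longrightarrow>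
        eventually (\<lambda>k. \<forall>l\<in>{0..a1}. \<forall>x\<in>{0..a2}.
          \<bar>Fk (h k) k (\<gamma> k) l x - Ffun \<beta> q \<pi> l x\<bar> < \<epsilon>) sequentially"
    \<comment> \<open>condition (C)\<close>
    and C: "\<exists>K1>0. \<forall>x\<ge>0. \<forall>k\<ge>1. \<exists>D.
        (h k (nat \<lfloor>real k * x\<rfloor>) has_real_derivative D) (at 1 within {0..1}) \<and>
        \<gamma> k / real k * D \<le> K1 * (1 + x)"
    \<comment> \<open>the stopping times\<close>
    and T_pos: "0 < T"
    and \<delta>_pos: "\<And>k. 0 < \<delta> k"
    and \<delta>_lim: "\<delta> \<longlonglongrightarrow> 0"
    and \<tau>_stop: "\<And>k. 1 \<le> k \<Longrightarrow> stopping_time (nat_filtration (M k) (Y k)) (\<tau> k)"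
    and \<tau>_bounds: "\<And>k \<omega>. 1 \<le> k \<Longrightarrow> \<omega> \<in> space (M k) \<Longrightarrow>
        0 \<le> \<tau> k \<omega> \<and> \<tau> k \<omega> < \<tau> k \<omega> + \<delta> k \<and> \<tau> k \<omega> + \<delta> k \<le> T"
    and lam_pos: "0 < lam"
  shows "(\<lambda>k. \<integral>\<omega>. (rho lam (Y k (\<tau> k \<omega> + \<delta> k) \<omega>) (Y k (\<tau> k \<omega>) \<omega>))^2 \<partial>M k)
           \<longlonglongrightarrow> 0"
proof -
  note PSd = PS_def
  obtain K1 where K1: "K1 > 0" and CK: "\<And>x k. x \<ge> 0 \<Longrightarrow> k \<ge> 1 \<Longrightarrow> \<exists>D.
        (h k (nat \<lfloor>real k * x\<rfloor>) has_real_derivative D) (at 1 within {0..1}) \<and>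
        \<gamma> k / real k * D \<le> K1 * (1 + x)"
    using C by blast
  obtain L where L: "\<And>k l1 l2. k \<ge> 1 \<Longrightarrow> 0 \<le> l1 \<and> l1 \<le> min (2 * lam) (real k) \<and> 0 \<le> l2 \<and> l2 \<le> min (2 * lam) (real k) \<Longrightarrow>
        \<bar>Rk (g k) k (\<gamma> k) l1 - Rk (g k) k (\<gamma> k) l2\<bar> \<le> L * \<bar>l1 - l2\<bar>"
    using A_lip[of "2 * lam"] lam_pos by auto
  define L0 where "L0 = max L 0"
  define C1 where "C1 = 6 * L0 + 2 * K1 * (lam + 1)"
  define C2 where "C2 = 6 * L0 + 2 * K1 * (2 * lam + 1)"
  have L0: "0 \<le> L0" "L \<le> L0" by (auto simp: L0_def)
  have key: "(\<integral>\<omega>. (rho lam (Y k (\<tau> k \<omega> + \<delta> k) \<omega>) (Y k (\<tau> k \<omega>) \<omega>))^2 \<partial>M k)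
      \<le> (C2 / \<gamma> k + 2 * (C1 / \<gamma> k)) * (\<gamma> k * \<delta> k + 1)"
    if k1: "1 \<le> k" and klam: "2 * lam \<le> real k" and kg: "4 * L0 \<le> \<gamma> k" for k
  proof -
    have kpos: "0 < real k" using k1 by simp
    have P: "prob_space (M k)" by (rule prob[OF k1])
    have xiM: "\<And>n i. xi k n i \<in> measurable (M k) (count_space UNIV)" using xi_meas[OF k1] .
    have psiM: "\<And>n. psi k n \<in> measurable (M k) (PiM UNIV (\<lambda>_. count_space UNIV))"
      using psi_meas[OF k1] unfolding PSd .
    have bp: "bpdi (M k) (xi k) (psi k) (Z0 k)"
      unfolding bpdi_def bpdi_axioms_def
    proof (intro conjI P allI)
      show "\<And>n i. xi k n i \<in> measurable (M k) (count_space UNIV)" by (rule xiM)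
      show "\<And>n. psi k n \<in> measurable (M k) (PiM UNIV (\<lambda>_. count_space UNIV))" by (rule psiM)
      show "Z0 k \<in> measurable (M k) (count_space UNIV)" by (rule Z0_meas[OF k1])
      show "prob_space.indep_sets (M k) (Ev (xi k) (psi k) (Z0 k) (M k)) Ix"
        using indep[OF k1] unfolding PSd Ev_def[abs_def] Ix_def .
    qed
    interpret B: bpdi "M k" "xi k" "psi k" "Z0 k" by (rule bp)
    have psiz: "(\<lambda>\<omega>. psi k n \<omega> z) \<in> measurable (M k) (count_space UNIV)" for n z
      using measurable_component_singleton'[OF psiM measurable_ident, of z n] by simp
    have g1: "g k 1 = 1"
    proof -
      have "pgf (M k) (xi k 0 1) 1 = g k 1" by (rule xi_pgf[OF k1]) auto
      then show ?thesis using pgf_facts(3)[OF P xiM[of 0 1], of 1] by simp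
    qed
    have g01: "0 \<le> g k t" "g k t \<le> 1" if "0 \<le> t" "t \<le> 1" for t
    proof -
      have "pgf (M k) (xi k 0 1) t = g k t" by (rule xi_pgf[OF k1]) (use that in auto)
      then show "0 \<le> g k t" "g k t \<le> 1" using pgf_facts(1,2)[OF P xiM[of 0 1] that] by auto
    qed
    have Rk0: "Rk (g k) k (\<gamma> k) 0 = 0" by (simp add: Rk_def g1)
    have bnd: "\<bar>g k (exp (- lam' / real k)) ^ z * (\<integral>\<omega>'. g k (exp (- lam' / real k)) ^ psi k n \<omega>' z \<partial>M k)
                - exp (- lam' / real k) ^ z\<bar> \<le> (6 * L0 + 2 * K1 * (lam' + 1)) / \<gamma> k"
      if lp: "0 < lam'" "lam' \<le> 2 * lam" for lam' n z
    proof -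
      define s where "s = exp (- lam' / real k)"
      define a where "a = g k s"
      have s01: "0 < s" "s \<le> 1" using lp kpos by (auto simp: s_def)
      have a01: "0 \<le> a" "a \<le> 1" using g01[of s] s01 by (auto simp: a_def)
      have Hp: "(\<integral>\<omega>'. a ^ psi k n \<omega>' z \<partial>M k) = h k z a"
        using psi_pgf[OF k1 a01, of n z] by (simp add: pgf_def)
      obtain D where D: "(h k (nat \<lfloor>real k * (real z / real k)\<rfloor>) has_real_derivative D) (at 1 within {0..1})"
        and Dk: "\<gamma> k / real k * D \<le> K1 * (1 + real z / real k)"
        using CK[of "real z / real k" k] k1 by auto
      have zz: "nat \<lfloor>real k * (real z / real k)\<rfloor> = z" using kpos by simp
      have H01: "0 \<le> h k z a" "h k z a \<le> 1"
        using psi_pgf[OF k1 a01, of n z] pgf_facts(1,2)[OF P psiz[of n z] a01] by auto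
      have HD: "1 - h k z a \<le> D * (1 - a)"
        by (rule pgf_bound[OF P psiz[of n z] _ _ a01]) (use psi_pgf[OF k1] D zz in auto)
      define \<mu> where "\<mu> = real k * (1 - s)"
      have smu: "1 - \<mu> / real k = s" using kpos by (simp add: \<mu>_def)
      have mu0: "0 \<le> \<mu>" using s01 kpos by (simp add: \<mu>_def)
      have mu1: "\<mu> \<le> lam'"
      proof -
        have "1 - s \<le> lam' / real k" using exp_minus_ge[of "lam' / real k"] by (simp add: s_def)
        then show ?thesis using kpos by (simp add: \<mu>_def field_simps)
      qed
      have mu2: "\<mu> \<le> real k" using s01 kpos by (simp add: \<mu>_def)
      have aR: "\<bar>real k * \<gamma> k * (a - s)\<bar> \<le> L0 * \<mu>"
      proof -
        have "\<bar>Rk (g k) k (\<gamma> k) \<mu> - Rk (g k) k (\<gamma> k) 0\<bar> \<le> L * \<bar>\<mu> - 0\<bar>"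
          by (rule L[OF k1]) (use mu0 mu1 mu2 lp in auto)
        also have "\<dots> \<le> L0 * \<mu>" using mu0 L0 by (simp add: mult_right_mono)
        finally show ?thesis by (simp add: Rk_def smu a_def g1)
      qed
      have "\<bar>a ^ z * h k z a - exp (- lam' / real k) ^ z\<bar> \<le> (6 * L0 + 2 * K1 * (lam' + 1)) / \<gamma> k"
      proof (rule analytic[OF k1 lp(1) _ \<gamma>_pos kg L0(1) _ a01 _ H01 HD Dk])
        show "lam' \<le> real k" using lp klam by linarith
        show "0 \<le> K1" using K1 by simp
        show "\<bar>real k * \<gamma> k * (a - exp (- lam' / real k))\<bar> \<le> L0 * (real k * (1 - exp (- lam' / real k)))"
          using aR by (simp add: s_def \<mu>_def)
      qed
      then have "\<bar>a ^ z * (\<integral>\<omega>'. a ^ psi k n \<omega>' z \<partial>M k) - s ^ z\<bar> \<le> (6 * L0 + 2 * K1 * (lam' + 1)) / \<gamma> k"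
        unfolding Hp s_def .
      then show ?thesis by (simp only: a_def s_def)
    qed
    define s where "s = exp (- lam / real k)"
    have s01: "0 \<le> s" "s \<le> 1" using lam_pos kpos by (auto simp: s_def)
    have s2: "s ^ 2 = exp (- (2 * lam) / real k)"
      by (simp add: s_def power2_eq_square exp_add[symmetric])
    have s2_01: "0 \<le> s^2" "s^2 \<le> 1" using s01 by (auto simp: power_le_one)
    have mb: "(\<integral>\<omega>. (s ^ Z k (nat \<lfloor>\<gamma> k * (\<tau> k \<omega> + \<delta> k)\<rfloor>) \<omega> - s ^ Z k (nat \<lfloor>\<gamma> k * \<tau> k \<omega>\<rfloor>) \<omega>)^2 \<partial>M k)
          \<le> (C2 / \<gamma> k + 2 * (C1 / \<gamma> k)) * (\<gamma> k * \<delta> k + 1)"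
      unfolding Z_def
    proof (rule B.main_bound[OF \<gamma>_pos \<delta>_pos _ _ s01])
      show "stopping_time (nat_filtration (M k) (\<lambda>t \<omega>. Yproc k (\<gamma> k) (Zproc (xi k) (psi k) (Z0 k)) t \<omega>)) (\<tau> k)"
        using \<tau>_stop[OF k1] unfolding Y_def Z_def .
      show "\<And>\<omega>. \<omega> \<in> space (M k) \<Longrightarrow> 0 \<le> \<tau> k \<omega> \<and> \<tau> k \<omega> + \<delta> k \<le> T"
        using \<tau>_bounds[OF k1] by auto
      show "\<And>n i. 1 \<le> i \<Longrightarrow> (\<integral>\<omega>. s ^ xi k n i \<omega> \<partial>M k) = g k s"
        using xi_pgf[OF k1 _ s01] by (simp add: pgf_def)
      show "\<And>n i. 1 \<le> i \<Longrightarrow> (\<integral>\<omega>. (s^2) ^ xi k n i \<omega> \<partial>M k) = g k (s^2)"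
        using xi_pgf[OF k1 _ s2_01] by (simp add: pgf_def)
      show "\<And>n z. \<bar>g k s ^ z * (\<integral>\<omega>'. g k s ^ psi k n \<omega>' z \<partial>M k) - s ^ z\<bar> \<le> C1 / \<gamma> k"
        using bnd[of lam] lam_pos unfolding s_def C1_def by auto
      show "\<And>n z. \<bar>g k (s^2) ^ z * (\<integral>\<omega>'. g k (s^2) ^ psi k n \<omega>' z \<partial>M k) - (s^2) ^ z\<bar> \<le> C2 / \<gamma> k"
        using bnd[of "2 * lam"] lam_pos unfolding s2 C2_def by auto
    qed
    have "rho lam (Y k (\<tau> k \<omega> + \<delta> k) \<omega>) (Y k (\<tau> k \<omega>) \<omega>) ^ 2
        = (s ^ Z k (nat \<lfloor>\<gamma> k * (\<tau> k \<omega> + \<delta> k)\<rfloor>) \<omega> - s ^ Z k (nat \<lfloor>\<gamma> k * \<tau> k \<omega>\<rfloor>) \<omega>)^2" for \<omega>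
    proof -
      have e: "exp (- lam * (real n / real k)) = s ^ n" for n
        by (simp add: s_def exp_of_nat_mult[symmetric] algebra_simps)
      show ?thesis unfolding rho_def Y_def Yproc_def e power2_abs ..
    qed
    then show ?thesis using mb by simp
  qed
  show ?thesis
  proof (rule tendsto_sandwich[where f="\<lambda>k. 0" and h="\<lambda>k. (C2 + 2 * C1) * (\<delta> k + inverse (\<gamma> k))"])
    show "eventually (\<lambda>k. 0 \<le> (\<integral>\<omega>. (rho lam (Y k (\<tau> k \<omega> + \<delta> k) \<omega>) (Y k (\<tau> k \<omega>) \<omega>))^2 \<partial>M k)) sequentially"
      by (intro always_eventually allI integral_nonneg_AE) auto
    have ev1: "eventually (\<lambda>k. 4 * L0 \<le> \<gamma> k) sequentially"
      using \<gamma>_lim by (simp add: filterlim_at_top)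
    have ev2: "eventually (\<lambda>k. 1 \<le> k \<and> 2 * lam \<le> real k) sequentially"
    proof -
      obtain N :: nat where "2 * lam \<le> real N" using real_arch_simple by blast
      then show ?thesis unfolding eventually_sequentially
        by (intro exI[of _ "max 1 N"]) auto
    qed
    show "eventually (\<lambda>k. (\<integral>\<omega>. (rho lam (Y k (\<tau> k \<omega> + \<delta> k) \<omega>) (Y k (\<tau> k \<omega>) \<omega>))^2 \<partial>M k)
        \<le> (C2 + 2 * C1) * (\<delta> k + inverse (\<gamma> k))) sequentially"
      using ev1 ev2
    proof eventually_elim
      case (elim k)
      have "(C2 / \<gamma> k + 2 * (C1 / \<gamma> k)) * (\<gamma> k * \<delta> k + 1) = (C2 + 2 * C1) * (\<delta> k + inverse (\<gamma> k))"
        using \<gamma>_pos[of k] by (simp add: field_simps)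
      then show ?case using key[of k] elim by auto
    qed
    show "(\<lambda>k. 0) \<longlonglongrightarrow> 0" by simp
    have "(\<lambda>k. inverse (\<gamma> k)) \<longlonglongrightarrow> 0"
      by (rule tendsto_inverse_0_at_top[OF \<gamma>_lim])
    then have "(\<lambda>k. (C2 + 2 * C1) * (\<delta> k + inverse (\<gamma> k))) \<longlonglongrightarrow> (C2 + 2 * C1) * (0 + 0)"
      by (intro tendsto_intros \<delta>_lim)
    then show "(\<lambda>k. (C2 + 2 * C1) * (\<delta> k + inverse (\<gamma> k))) \<longlonglongrightarrow> 0" by simp
  qed
qed


end
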